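(* Let $M$ be a proper $(4,4)$-map with only finitely many non-flat faces and vertices. Then the $1$-skeleton of $M$ (with its path metric) is quasi-isometric to the $1$-skeleton of a proper planar map in which every face has degree $4$ and only finitely many vertices are non-flat (have degree different from $4$).
   Context: A proper map is a tessellation of $\mathbb R^2$ by a 2-complex whose support is the whole plane and such that every disc meets only finitely many cells. Degree of a face: length of its boundary path; degree of a vertex: number of oriented edges starting there. It is a $(4,4)$-map if every face and every vertex has degree $\ge4$; a face or vertex is flat if its degree is exactly $4$, non-flat otherwise. Two metric spaces are quasi-isometric if there is a map $\phi$ between them with image coarsely dense and $-K+\frac1Ld(x,y)<d(\phi x,\phi y)<K+Ld(x,y)$ for some constants $L>1,K>0$. *)

theory Defs
  imports Complex_Main
begin

text \<open>Planar maps are encoded combinatorially as rotation systems (combinatorial maps):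
  a set of darts (oriented edges) D, a fixed-point-free involution alpha on D
  (reversal of orientation) and a permutation sigma of D (cyclic order of the darts
  leaving a vertex).  Vertices are sigma-orbits, faces are orbits of
  phi = sigma o alpha (the boundary walk of a face).\<close>

definition is_cmap :: "'d set \<Rightarrow> ('d \<Rightarrow> 'd) \<Rightarrow> ('d \<Rightarrow> 'd) \<Rightarrow> bool" where
  "is_cmap D \<alpha> \<sigma> \<longleftrightarrow> (\<forall>d\<in>D. \<alpha> d \<in> D \<and> \<alpha> (\<alpha> d) = d \<and> \<alpha> d \<noteq> d) \<and> bij_betw \<sigma> D D"

definition vorb :: "('d \<Rightarrow> 'd) \<Rightarrow> 'd \<Rightarrow> 'd set" where
  "vorb \<sigma> d = {(\<sigma> ^^ n) d | n. True}"

definition fphi :: "('d \<Rightarrow> 'd) \<Rightarrow> ('d \<Rightarrow> 'd) \<Rightarrow> 'd \<Rightarrow> 'd" where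
  "fphi \<alpha> \<sigma> = \<sigma> \<circ> \<alpha>"

definition forb :: "('d \<Rightarrow> 'd) \<Rightarrow> ('d \<Rightarrow> 'd) \<Rightarrow> 'd \<Rightarrow> 'd set" where
  "forb \<alpha> \<sigma> d = {(fphi \<alpha> \<sigma> ^^ n) d | n. True}"

definition vdeg :: "('d \<Rightarrow> 'd) \<Rightarrow> 'd \<Rightarrow> nat" where
  "vdeg \<sigma> d = card (vorb \<sigma> d)"

definition fdeg :: "('d \<Rightarrow> 'd) \<Rightarrow> ('d \<Rightarrow> 'd) \<Rightarrow> 'd \<Rightarrow> nat" where
  "fdeg \<alpha> \<sigma> d = card (forb \<alpha> \<sigma> d)"

definition verts :: "'d set \<Rightarrow> ('d \<Rightarrow> 'd) \<Rightarrow> 'd set set" where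
  "verts D \<sigma> = vorb \<sigma> ` D"

fun is_walk :: "'d set \<Rightarrow> ('d \<Rightarrow> 'd) \<Rightarrow> ('d \<Rightarrow> 'd) \<Rightarrow> 'd set \<Rightarrow> 'd list \<Rightarrow> 'd set \<Rightarrow> bool" where
  "is_walk D \<alpha> \<sigma> u [] v \<longleftrightarrow> u = v"
| "is_walk D \<alpha> \<sigma> u (d # ds) v \<longleftrightarrow> d \<in> D \<and> vorb \<sigma> d = u \<and> is_walk D \<alpha> \<sigma> (vorb \<sigma> (\<alpha> d)) ds v"

definition facewalk :: "('d \<Rightarrow> 'd) \<Rightarrow> ('d \<Rightarrow> 'd) \<Rightarrow> 'd \<Rightarrow> 'd list" where
  "facewalk \<alpha> \<sigma> d = map (\<lambda>i. (fphi \<alpha> \<sigma> ^^ i) d) [0..<fdeg \<alpha> \<sigma> d]"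

definition hstep :: "'d set \<Rightarrow> ('d \<Rightarrow> 'd) \<Rightarrow> ('d \<Rightarrow> 'd) \<Rightarrow> 'd list \<Rightarrow> 'd list \<Rightarrow> bool" where
  "hstep D \<alpha> \<sigma> w w' \<longleftrightarrow> (\<exists>xs ys d. d \<in> D \<and> w = xs @ ys \<and>
      (w' = xs @ [d, \<alpha> d] @ ys \<or> w' = xs @ facewalk \<alpha> \<sigma> d @ ys))"

definition homot_rel :: "'d set \<Rightarrow> ('d \<Rightarrow> 'd) \<Rightarrow> ('d \<Rightarrow> 'd) \<Rightarrow> 'd set \<Rightarrow> ('d list \<times> 'd list) set" where
  "homot_rel D \<alpha> \<sigma> u = {(w, w'). is_walk D \<alpha> \<sigma> u w u \<and> is_walk D \<alpha> \<sigma> u w' u \<and>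
      (hstep D \<alpha> \<sigma> w w' \<or> hstep D \<alpha> \<sigma> w' w)}"

definition simply_connected_map :: "'d set \<Rightarrow> ('d \<Rightarrow> 'd) \<Rightarrow> ('d \<Rightarrow> 'd) \<Rightarrow> bool" where
  "simply_connected_map D \<alpha> \<sigma> \<longleftrightarrow>
     (\<forall>u\<in>verts D \<sigma>. \<forall>w. is_walk D \<alpha> \<sigma> u w u \<longrightarrow> (w, []) \<in> (homot_rel D \<alpha> \<sigma> u)\<^sup>*)"

definition connected_map :: "'d set \<Rightarrow> ('d \<Rightarrow> 'd) \<Rightarrow> ('d \<Rightarrow> 'd) \<Rightarrow> bool" where
  "connected_map D \<alpha> \<sigma> \<longleftrightarrow> (\<forall>u\<in>verts D \<sigma>. \<forall>v\<in>verts D \<sigma>. \<exists>w. is_walk D \<alpha> \<sigma> u w v)"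

text \<open>proper map = locally finite tessellation of the plane: a connected, simply connected,
  infinite, locally finite combinatorial map (its realisation is a non-compact simply
  connected surface, i.e. homeomorphic to R^2)\<close>
definition proper_map :: "'d set \<Rightarrow> ('d \<Rightarrow> 'd) \<Rightarrow> ('d \<Rightarrow> 'd) \<Rightarrow> bool" where
  "proper_map D \<alpha> \<sigma> \<longleftrightarrow> is_cmap D \<alpha> \<sigma> \<and> infinite D \<and>
     (\<forall>d\<in>D. finite (vorb \<sigma> d) \<and> finite (forb \<alpha> \<sigma> d)) \<and>
     connected_map D \<alpha> \<sigma> \<and> simply_connected_map D \<alpha> \<sigma>"

definition four_four_map :: "'d set \<Rightarrow> ('d \<Rightarrow> 'd) \<Rightarrow> ('d \<Rightarrow> 'd) \<Rightarrow> bool" where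
  "four_four_map D \<alpha> \<sigma> \<longleftrightarrow> (\<forall>d\<in>D. vdeg \<sigma> d \<ge> 4 \<and> fdeg \<alpha> \<sigma> d \<ge> 4)"

definition nonflat_vertices :: "'d set \<Rightarrow> ('d \<Rightarrow> 'd) \<Rightarrow> 'd set set" where
  "nonflat_vertices D \<sigma> = {vorb \<sigma> d | d. d \<in> D \<and> vdeg \<sigma> d \<noteq> 4}"

definition nonflat_faces :: "'d set \<Rightarrow> ('d \<Rightarrow> 'd) \<Rightarrow> ('d \<Rightarrow> 'd) \<Rightarrow> 'd set set" where
  "nonflat_faces D \<alpha> \<sigma> = {forb \<alpha> \<sigma> d | d. d \<in> D \<and> fdeg \<alpha> \<sigma> d \<noteq> 4}"

definition gdist :: "'d set \<Rightarrow> ('d \<Rightarrow> 'd) \<Rightarrow> ('d \<Rightarrow> 'd) \<Rightarrow> 'd set \<Rightarrow> 'd set \<Rightarrow> real" where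
  "gdist D \<alpha> \<sigma> u v = real (LEAST n. \<exists>w. is_walk D \<alpha> \<sigma> u w v \<and> length w = n)"

definition quasi_isometric :: "'a set \<Rightarrow> ('a \<Rightarrow> 'a \<Rightarrow> real) \<Rightarrow> 'b set \<Rightarrow> ('b \<Rightarrow> 'b \<Rightarrow> real) \<Rightarrow> bool" where
  "quasi_isometric X dX Y dY \<longleftrightarrow> (\<exists>\<phi> L K C. \<phi> ` X \<subseteq> Y \<and> L > 1 \<and> K > 0 \<and>
     (\<forall>x\<in>X. \<forall>y\<in>X. - K + dX x y / L < dY (\<phi> x) (\<phi> y) \<and> dY (\<phi> x) (\<phi> y) < K + L * dX x y) \<and>
     (\<forall>z\<in>Y. \<exists>x\<in>X. dY z (\<phi> x) \<le> C))"

end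

theory Submission
  imports Defs "HOL-Library.Countable_Set"
begin

lemma funpow_in: "f ` S \<subseteq> S \<Longrightarrow> d \<in> S \<Longrightarrow> (f ^^ n) d \<in> S"
  by (induct n) auto

lemma funpow_cancel:
  assumes "inj_on f S" "f ` S \<subseteq> S" "x \<in> S" "y \<in> S" "(f ^^ n) x = (f ^^ n) y"
  shows "x = y"
  using assms(5)
proof (induct n)
  case 0 then show ?case by simp
next
  case (Suc n)
  have "f ((f ^^ n) x) = f ((f ^^ n) y)" using Suc.prems by simp
  then have "(f ^^ n) x = (f ^^ n) y"
    using assms(1) funpow_in[OF assms(2) assms(3)] funpow_in[OF assms(2) assms(4)]
    by (meson inj_onD)
  then show ?case using Suc.hyps by simp
qed

lemma orbit_period_exists:
  assumes "inj_on f S" "f ` S \<subseteq> S" "d \<in> S" "finite {(f ^^ n) d |n. True}"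
  shows "\<exists>p>0. (f ^^ p) d = d"
proof -
  have r: "range (\<lambda>n. (f ^^ n) d) = {(f ^^ n) d |n. True}" by auto
  have "\<not> inj (\<lambda>n. (f ^^ n) d)"
  proof
    assume "inj (\<lambda>n. (f ^^ n) d)"
    then have "finite (UNIV::nat set)" using assms(4) r by (metis finite_imageD)
    then show False by simp
  qed
  then obtain i j where ij: "i \<noteq> j" "(f ^^ i) d = (f ^^ j) d" unfolding inj_def by blast
  have "\<exists>i j. i < j \<and> (f ^^ i) d = (f ^^ j) d"
    using ij by (metis linorder_neqE_nat)
  then obtain i j where ij: "i < j" "(f ^^ i) d = (f ^^ j) d" by blast
  have "(f ^^ j) d = (f ^^ i) ((f ^^ (j - i)) d)"
    using ij(1) by (metis funpow_add le_add_diff_inverse less_imp_le_nat o_apply)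
  then have "(f ^^ i) d = (f ^^ i) ((f ^^ (j - i)) d)" using ij by simp
  then have "d = (f ^^ (j - i)) d"
    using funpow_cancel[OF assms(1,2) assms(3) funpow_in[OF assms(2,3)]] by blast
  then show ?thesis using ij(1) by (intro exI[of _ "j - i"]) auto
qed

lemma funpow_mod:
  assumes "(f ^^ p) d = d"
  shows "(f ^^ n) d = (f ^^ (n mod p)) d"
proof -
  have k: "(f ^^ (p * k)) d = d" for k
    by (induct k) (simp_all add: funpow_add assms)
  have "n = n mod p + p * (n div p)" by simp
  then have "(f ^^ n) d = (f ^^ (n mod p)) ((f ^^ (p * (n div p))) d)"
    by (metis funpow_add o_apply)
  then show ?thesis using k by simp
qed

lemma orbit_facts:
  assumes "inj_on f S" "f ` S \<subseteq> S" "d \<in> S" "finite {(f ^^ n) d |n. True}"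
  shows "(f ^^ card {(f ^^ n) d |n. True}) d = d"
    and "{(f ^^ n) d |n. True} = {(f ^^ k) d |k. k < card {(f ^^ n) d |n. True}}"
    and "card {(f ^^ n) d |n. True} > 0"
proof -
  define p where "p = (LEAST p. p > 0 \<and> (f ^^ p) d = d)"
  have ex: "\<exists>p>0. (f ^^ p) d = d" using orbit_period_exists[OF assms] .
  have pp: "p > 0" "(f ^^ p) d = d"
    using LeastI_ex[OF ex] unfolding p_def by auto
  have pmin: "\<And>q. 0 < q \<Longrightarrow> q < p \<Longrightarrow> (f ^^ q) d \<noteq> d"
    unfolding p_def using not_less_Least by blast
  have orb: "{(f ^^ n) d |n. True} = (\<lambda>k. (f ^^ k) d) ` {..<p}"
  proof (intro equalityI subsetI)
    fix x assume "x \<in> {(f ^^ n) d |n. True}"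
    then obtain n where "x = (f ^^ n) d" by blast
    then have "x = (f ^^ (n mod p)) d" using funpow_mod[OF pp(2)] by simp
    then show "x \<in> (\<lambda>k. (f ^^ k) d) ` {..<p}" using pp(1) by auto
  qed auto
  have inj: "inj_on (\<lambda>k. (f ^^ k) d) {..<p}"
  proof (rule inj_onI, rule ccontr)
    fix i j assume a: "i \<in> {..<p}" "j \<in> {..<p}" "(f ^^ i) d = (f ^^ j) d" "i \<noteq> j"
    have "\<exists>i j. i < j \<and> j < p \<and> (f ^^ i) d = (f ^^ j) d"
      using a by (metis lessThan_iff linorder_neqE_nat)
    then obtain i j where ij: "i < j" "j < p" "(f ^^ i) d = (f ^^ j) d" by blast
    have "(f ^^ j) d = (f ^^ i) ((f ^^ (j - i)) d)"
      using ij(1) by (metis funpow_add le_add_diff_inverse less_imp_le_nat o_apply)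
    then have "(f ^^ i) d = (f ^^ i) ((f ^^ (j - i)) d)" using ij by simp
    then have "d = (f ^^ (j - i)) d"
      using funpow_cancel[OF assms(1,2) assms(3) funpow_in[OF assms(2,3)]] by blast
    then show False using pmin[of "j - i"] ij by (metis diff_le_self le_less_trans zero_less_diff)
  qed
  have c: "card {(f ^^ n) d |n. True} = p"
    using orb inj by (simp add: card_image)
  show "(f ^^ card {(f ^^ n) d |n. True}) d = d" using c pp by simp
  show "card {(f ^^ n) d |n. True} > 0" using c pp by simp
  show "{(f ^^ n) d |n. True} = {(f ^^ k) d |k. k < card {(f ^^ n) d |n. True}}"
  proof -
    have "{(f ^^ n) d |n. True} = {(f ^^ k) d |k. k < p}" using orb by auto
    then show ?thesis using c by simp
  qed
qed

lemma orbit_step_eq: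
  assumes "(f ^^ p) d = d" "p > 0"
  shows "{(f ^^ n) (f d) |n. True} = {(f ^^ n) d |n. True}"
proof (intro equalityI subsetI)
  fix x assume "x \<in> {(f ^^ n) (f d) |n. True}"
  then obtain n where "x = (f ^^ n) (f d)" by blast
  then have "x = (f ^^ Suc n) d" by (simp add: funpow_swap1)
  then show "x \<in> {(f ^^ n) d |n. True}" by blast
next
  fix x assume "x \<in> {(f ^^ n) d |n. True}"
  then obtain n where "x = (f ^^ n) d" by blast
  then have "x = (f ^^ (n + p)) d" using assms(1) by (simp add: funpow_add)
  also have "n + p = Suc (n + p - 1)" using assms(2) by simp
  finally have "x = (f ^^ (n + p - 1)) (f d)" by (simp add: funpow_swap1)
  then show "x \<in> {(f ^^ n) (f d) |n. True}" by blast
qed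

lemma orbit_mem_eq:
  assumes "\<And>y. y \<in> {(f ^^ n) d |n. True} \<Longrightarrow> \<exists>p>0. (f ^^ p) y = y"
    and "x \<in> {(f ^^ n) d |n. True}"
  shows "{(f ^^ n) x |n. True} = {(f ^^ n) d |n. True}"
proof -
  obtain m where x: "x = (f ^^ m) d" using assms(2) by blast
  have "\<forall>k\<le>m. {(f ^^ n) ((f ^^ k) d) |n. True} = {(f ^^ n) d |n. True}"
  proof (intro allI impI)
    fix k assume "k \<le> m"
    then show "{(f ^^ n) ((f ^^ k) d) |n. True} = {(f ^^ n) d |n. True}"
    proof (induct k)
      case 0 then show ?case by simp
    next
      case (Suc k)
      have mem: "(f ^^ k) d \<in> {(f ^^ n) d |n. True}" by blast
      obtain p where "p > 0" "(f ^^ p) ((f ^^ k) d) = (f ^^ k) d" using assms(1)[OF mem] by blast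
      then have "{(f ^^ n) (f ((f ^^ k) d)) |n. True} = {(f ^^ n) ((f ^^ k) d) |n. True}"
        using orbit_step_eq by metis
      then show ?case using Suc by simp
    qed
  qed
  then show ?thesis using x by blast
qed

lemma walk_append:
  "is_walk D \<alpha> \<sigma> u (xs @ ys) v \<longleftrightarrow> (\<exists>m. is_walk D \<alpha> \<sigma> u xs m \<and> is_walk D \<alpha> \<sigma> m ys v)"
  by (induct xs arbitrary: u) auto

lemma walk_appendI:
  "is_walk D \<alpha> \<sigma> u xs m \<Longrightarrow> is_walk D \<alpha> \<sigma> m ys v \<Longrightarrow> is_walk D \<alpha> \<sigma> u (xs @ ys) v"
  using walk_append by blast

lemma walk_set: "is_walk D \<alpha> \<sigma> u w v \<Longrightarrow> set w \<subseteq> D"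
  by (induct w arbitrary: u) auto

definition rw :: "('d \<Rightarrow> 'd) \<Rightarrow> 'd list \<Rightarrow> 'd list" where
  "rw \<alpha> w = rev (map \<alpha> w)"

lemma rw_simps[simp]: "rw \<alpha> [] = []" "rw \<alpha> (d # w) = rw \<alpha> w @ [\<alpha> d]"
  "rw \<alpha> (xs @ ys) = rw \<alpha> ys @ rw \<alpha> xs"
  by (auto simp: rw_def)

lemma walk_rw:
  assumes "\<forall>d\<in>D. \<alpha> d \<in> D \<and> \<alpha> (\<alpha> d) = d"
  shows "is_walk D \<alpha> \<sigma> u w v \<Longrightarrow> is_walk D \<alpha> \<sigma> v (rw \<alpha> w) u"
proof (induct w arbitrary: u)
  case Nil then show ?case by simp
next
  case (Cons d w)
  then have "is_walk D \<alpha> \<sigma> v (rw \<alpha> w) (vorb \<sigma> (\<alpha> d))" by simp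
  moreover have "is_walk D \<alpha> \<sigma> (vorb \<sigma> (\<alpha> d)) [\<alpha> d] u" using Cons.prems assms by auto
  ultimately show ?case by (simp add: walk_appendI)
qed

definition hrel :: "'d set \<Rightarrow> ('d \<Rightarrow> 'd) \<Rightarrow> ('d \<Rightarrow> 'd) \<Rightarrow> 'd set \<Rightarrow> 'd set \<Rightarrow> ('d list \<times> 'd list) set" where
  "hrel D \<alpha> \<sigma> u v = {(w, w'). is_walk D \<alpha> \<sigma> u w v \<and> is_walk D \<alpha> \<sigma> u w' v \<and>
      (hstep D \<alpha> \<sigma> w w' \<or> hstep D \<alpha> \<sigma> w' w)}"

definition hom where
  "hom D \<alpha> \<sigma> u v w w' \<longleftrightarrow> (w, w') \<in> (hrel D \<alpha> \<sigma> u v)\<^sup>*"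

lemma homot_rel_eq: "homot_rel D \<alpha> \<sigma> u = hrel D \<alpha> \<sigma> u u"
  unfolding homot_rel_def hrel_def by simp

lemma hom_refl[simp]: "hom D \<alpha> \<sigma> u v w w"
  unfolding hom_def by simp

lemma hom_trans: "hom D \<alpha> \<sigma> u v x y \<Longrightarrow> hom D \<alpha> \<sigma> u v y z \<Longrightarrow> hom D \<alpha> \<sigma> u v x z"
  unfolding hom_def by simp

lemma hrel_sym: "sym (hrel D \<alpha> \<sigma> u v)"
  unfolding hrel_def sym_def by auto

lemma hom_sym: "hom D \<alpha> \<sigma> u v x y \<Longrightarrow> hom D \<alpha> \<sigma> u v y x"
  unfolding hom_def using hrel_sym
  by (metis converse_rtrancl_into_rtrancl rtrancl.rtrancl_refl rtrancl_converseI sym_conv_converse_eq rtrancl_converse)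

lemma hom_walk: "hom D \<alpha> \<sigma> u v x y \<Longrightarrow> is_walk D \<alpha> \<sigma> u x v \<Longrightarrow> is_walk D \<alpha> \<sigma> u y v"
  unfolding hom_def
proof (induct rule: rtrancl_induct)
  case base then show ?case by simp
next
  case (step y z) then show ?case unfolding hrel_def by auto
qed

lemma hstep_ctx: "hstep D \<alpha> \<sigma> x y \<Longrightarrow> hstep D \<alpha> \<sigma> (p @ x @ q) (p @ y @ q)"
  unfolding hstep_def
  by (metis append.assoc)

lemma hom_ctx:
  assumes "hom D \<alpha> \<sigma> u v x y" "is_walk D \<alpha> \<sigma> a p u" "is_walk D \<alpha> \<sigma> v q b"
  shows "hom D \<alpha> \<sigma> a b (p @ x @ q) (p @ y @ q)"
  using assms(1) unfolding hom_def
proof (induct rule: rtrancl_induct)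
  case base then show ?case by simp
next
  case (step y z)
  have h: "hstep D \<alpha> \<sigma> (p @ y @ q) (p @ z @ q) \<or> hstep D \<alpha> \<sigma> (p @ z @ q) (p @ y @ q)"
    using step(2) hstep_ctx unfolding hrel_def by blast
  have "(p @ y @ q, p @ z @ q) \<in> hrel D \<alpha> \<sigma> a b"
    using step(2) assms(2,3) h unfolding hrel_def
    by (auto intro!: walk_appendI)
  then show ?case using step(3) by simp
qed

lemma hom_app:
  assumes "hom D \<alpha> \<sigma> u m x x'" "hom D \<alpha> \<sigma> m v y y'"
    "is_walk D \<alpha> \<sigma> u x m" "is_walk D \<alpha> \<sigma> m y v"
  shows "hom D \<alpha> \<sigma> u v (x @ y) (x' @ y')"
proof -
  have "hom D \<alpha> \<sigma> u v ([] @ x @ y) ([] @ x' @ y)"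
    by (rule hom_ctx[OF assms(1)]) (use assms in auto)
  moreover have "hom D \<alpha> \<sigma> u v (x' @ y @ []) (x' @ y' @ [])"
    by (rule hom_ctx[OF assms(2)]) (use assms hom_walk in auto)
  ultimately show ?thesis using hom_trans by fastforce
qed

lemma hom_stepI:
  assumes "is_walk D \<alpha> \<sigma> u w v" "is_walk D \<alpha> \<sigma> u w' v" "hstep D \<alpha> \<sigma> w w' \<or> hstep D \<alpha> \<sigma> w' w"
  shows "hom D \<alpha> \<sigma> u v w w'"
  using assms unfolding hom_def hrel_def by auto

lemma hom_back:
  assumes "\<forall>d\<in>D. \<alpha> d \<in> D \<and> \<alpha> (\<alpha> d) = d"
    and "is_walk D \<alpha> \<sigma> u (xs @ [d, \<alpha> d] @ ys) v"
  shows "hom D \<alpha> \<sigma> u v (xs @ [d, \<alpha> d] @ ys) (xs @ ys)"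
proof -
  obtain m m' where w: "is_walk D \<alpha> \<sigma> u xs m" "is_walk D \<alpha> \<sigma> m [d, \<alpha> d] m'"
    "is_walk D \<alpha> \<sigma> m' ys v"
    using assms(2) walk_append by metis
  have "m = m'" using w(2) assms(1) by auto
  then have "is_walk D \<alpha> \<sigma> u (xs @ ys) v" using w walk_appendI by metis
  moreover have "d \<in> D" using w(2) by simp
  moreover have "hstep D \<alpha> \<sigma> (xs @ ys) (xs @ [d, \<alpha> d] @ ys)"
    unfolding hstep_def using \<open>d \<in> D\<close> by blast
  ultimately show ?thesis using assms(2) by (intro hom_stepI) auto
qed

lemma hom_back0:
  assumes "\<forall>d\<in>D. \<alpha> d \<in> D \<and> \<alpha> (\<alpha> d) = d"
    and "is_walk D \<alpha> \<sigma> u ([d, \<alpha> d]) v"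
  shows "hom D \<alpha> \<sigma> u v [d, \<alpha> d] []"
  using hom_back[OF assms(1), where u=u and xs="[]" and d=d and ys="[]" and v=v] assms(2) by simp

lemma hom_rw_cancel:
  assumes "\<forall>d\<in>D. \<alpha> d \<in> D \<and> \<alpha> (\<alpha> d) = d"
  shows "is_walk D \<alpha> \<sigma> u w v \<Longrightarrow> hom D \<alpha> \<sigma> u u (w @ rw \<alpha> w) []"
proof (induct w arbitrary: u)
  case Nil then show ?case by simp
next
  case (Cons d w)
  then have w: "is_walk D \<alpha> \<sigma> (vorb \<sigma> (\<alpha> d)) w v" "d \<in> D" "vorb \<sigma> d = u" by auto
  have ih: "hom D \<alpha> \<sigma> (vorb \<sigma> (\<alpha> d)) (vorb \<sigma> (\<alpha> d)) (w @ rw \<alpha> w) []" using Cons w by auto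
  have "hom D \<alpha> \<sigma> u u ([d] @ (w @ rw \<alpha> w) @ [\<alpha> d]) ([d] @ [] @ [\<alpha> d])"
    by (rule hom_ctx[OF ih]) (use w assms in auto)
  moreover have "hom D \<alpha> \<sigma> u u [d, \<alpha> d] []"
    by (rule hom_back0[OF assms]) (use w assms in auto)
  ultimately show ?case using hom_trans by fastforce
qed

definition sw :: "nat \<Rightarrow> nat" where
  "sw i = (if i = 0 then 1 else if i = 1 then 0 else if i = 2 then 3 else 2)"

definition al2 :: "'d \<times> nat \<Rightarrow> 'd \<times> nat" where
  "al2 x = (fst x, sw (snd x))"

lemma al2_simps[simp]: "al2 (d, 0) = (d, 1)" "al2 (d, Suc 0) = (d, 0)"
  "al2 (d, 2) = (d, 3)" "al2 (d, 3) = (d, 2)"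
  by (auto simp: al2_def sw_def)

definition sg2 :: "'d set \<Rightarrow> ('d \<Rightarrow> 'd) \<Rightarrow> ('d \<Rightarrow> 'd) \<Rightarrow> 'd \<times> nat \<Rightarrow> 'd \<times> nat" where
  "sg2 D \<alpha> \<sigma> x = (let d = fst x; i = snd x in
     if i = 0 then (\<sigma> d, 0) else if i = 1 then (d, 2) else if i = 2 then (\<alpha> d, 1)
     else (inv_into D (fphi \<alpha> \<sigma>) d, 3))"

definition D2 :: "'d set \<Rightarrow> ('d \<times> nat) set" where
  "D2 D = D \<times> {0, 1, 2, 3}"

locale M =
  fixes D :: "'d set" and \<alpha> \<sigma> :: "'d \<Rightarrow> 'd"
  assumes cm: "is_cmap D \<alpha> \<sigma>"
    and fin: "\<forall>d\<in>D. finite (vorb \<sigma> d) \<and> finite (forb \<alpha> \<sigma> d)"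
begin

abbreviation "\<phi> \<equiv> fphi \<alpha> \<sigma>"
abbreviation "\<psi> \<equiv> inv_into D (fphi \<alpha> \<sigma>)"
abbreviation "s2 \<equiv> sg2 D \<alpha> \<sigma>"
abbreviation "DD \<equiv> D2 D"

lemma sg2_simps[simp]: "s2 (d, 0) = (\<sigma> d, 0)" "s2 (d, Suc 0) = (d, 2)"
  "s2 (d, 2) = (\<alpha> d, 1)" "s2 (d, 3) = (\<psi> d, 3)"
  by (auto simp: sg2_def)

lemma al: "d \<in> D \<Longrightarrow> \<alpha> d \<in> D" "d \<in> D \<Longrightarrow> \<alpha> (\<alpha> d) = d" "d \<in> D \<Longrightarrow> \<alpha> d \<noteq> d"
  using cm unfolding is_cmap_def by auto

lemma al_all: "\<forall>d\<in>D. \<alpha> d \<in> D \<and> \<alpha> (\<alpha> d) = d" using al by auto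

lemma sg_bij: "bij_betw \<sigma> D D" using cm unfolding is_cmap_def by auto
lemma sg_inj: "inj_on \<sigma> D" using sg_bij bij_betw_def by blast
lemma sg_D: "d \<in> D \<Longrightarrow> \<sigma> d \<in> D" using sg_bij bij_betwE by blast
lemma sg_img: "\<sigma> ` D \<subseteq> D" using sg_D by blast

lemma al_inj: "inj_on \<alpha> D" by (metis al(2) inj_onI)

lemma ph_D: "d \<in> D \<Longrightarrow> \<phi> d \<in> D" by (simp add: fphi_def al sg_D)
lemma ph_img: "\<phi> ` D \<subseteq> D" using ph_D by blast
lemma ph_inj: "inj_on \<phi> D"
  unfolding fphi_def using sg_inj al_inj al(1)
  by (metis comp_inj_on image_subsetI inj_on_subset)
lemma ph_surj: "\<phi> ` D = D"
proof
  show "D \<subseteq> \<phi> ` D"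
  proof
    fix d assume "d \<in> D"
    then obtain e where "e \<in> D" "\<sigma> e = d" using sg_bij by (metis bij_betw_imp_surj_on imageE)
    then have "\<phi> (\<alpha> e) = d" "\<alpha> e \<in> D" by (auto simp: fphi_def al)
    then show "d \<in> \<phi> ` D" by blast
  qed
qed (rule ph_img)
lemma ph_bij: "bij_betw \<phi> D D" using ph_inj ph_surj bij_betw_def by blast

lemma ps_D: "d \<in> D \<Longrightarrow> \<psi> d \<in> D" using ph_surj by (metis inv_into_into)
lemma ph_ps: "d \<in> D \<Longrightarrow> \<phi> (\<psi> d) = d" using ph_surj by (metis f_inv_into_f)
lemma ps_ph: "d \<in> D \<Longrightarrow> \<psi> (\<phi> d) = d" using ph_inj by (metis inv_into_f_f)
lemma ps_img: "\<psi> ` D \<subseteq> D" using ps_D by blast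
lemma ps_inj: "inj_on \<psi> D" by (metis inj_onI ph_ps)

lemma forb_facts:
  assumes "d \<in> D"
  shows "(\<phi> ^^ fdeg \<alpha> \<sigma> d) d = d"
    and "forb \<alpha> \<sigma> d = {(\<phi> ^^ k) d |k. k < fdeg \<alpha> \<sigma> d}"
    and "fdeg \<alpha> \<sigma> d > 0"
  using orbit_facts[OF ph_inj ph_img assms] fin assms
  unfolding fdeg_def forb_def by auto

lemma vorb_period: "d \<in> D \<Longrightarrow> \<exists>p>0. (\<sigma> ^^ p) d = d"
  using orbit_period_exists[OF sg_inj sg_img] fin unfolding vorb_def by auto

lemma vorb_in_D: "d \<in> D \<Longrightarrow> x \<in> vorb \<sigma> d \<Longrightarrow> x \<in> D"
  unfolding vorb_def using funpow_in[OF sg_img] by blast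

lemma vorb_mem_eq: "d \<in> D \<Longrightarrow> x \<in> vorb \<sigma> d \<Longrightarrow> vorb \<sigma> x = vorb \<sigma> d"
  unfolding vorb_def
  by (rule orbit_mem_eq) (use vorb_period vorb_in_D in \<open>auto simp: vorb_def\<close>)

lemma vorb_self: "d \<in> vorb \<sigma> d" unfolding vorb_def by (metis (mono_tags) CollectI funpow_0)

lemma vorb_sg: "d \<in> D \<Longrightarrow> vorb \<sigma> (\<sigma> d) = vorb \<sigma> d"
  using vorb_mem_eq[of d "\<sigma> d"] unfolding vorb_def
  by (metis (mono_tags, lifting) CollectI funpow_0 funpow_swap1 funpow_simps_right(2) o_apply)

lemma forb_in_D: "d \<in> D \<Longrightarrow> x \<in> forb \<alpha> \<sigma> d \<Longrightarrow> x \<in> D"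
  unfolding forb_def using funpow_in[OF ph_img] by blast

lemma forb_mem_eq: "d \<in> D \<Longrightarrow> x \<in> forb \<alpha> \<sigma> d \<Longrightarrow> forb \<alpha> \<sigma> x = forb \<alpha> \<sigma> d"
  unfolding forb_def
  by (rule orbit_mem_eq) (use orbit_period_exists[OF ph_inj ph_img] fin forb_in_D in \<open>auto simp: forb_def\<close>)

lemma orbit_closed_sub:
  assumes "f ` S \<subseteq> S" "d \<in> S"
  shows "{(f ^^ n) d |n. True} \<subseteq> S"
  using funpow_in[OF assms] by blast

lemma ps_orbit: "d \<in> D \<Longrightarrow> {(\<psi> ^^ n) d |n. True} = forb \<alpha> \<sigma> d"
proof -
  assume d: "d \<in> D"
  let ?S = "forb \<alpha> \<sigma> d"
  have S: "?S = {(\<phi> ^^ k) d |k. k < fdeg \<alpha> \<sigma> d}" using forb_facts(2)[OF d] .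
  have Sd: "?S \<subseteq> D" using forb_in_D d by blast
  have clos: "\<psi> ` ?S \<subseteq> ?S"
  proof
    fix y assume "y \<in> \<psi> ` ?S"
    then obtain k where k: "k < fdeg \<alpha> \<sigma> d" "y = \<psi> ((\<phi> ^^ k) d)" using S by auto
    show "y \<in> ?S"
    proof (cases k)
      case 0
      have p: "fdeg \<alpha> \<sigma> d = Suc (fdeg \<alpha> \<sigma> d - 1)" using forb_facts(3)[OF d] by simp
      have "\<phi> ((\<phi> ^^ (fdeg \<alpha> \<sigma> d - 1)) d) = d"
        using forb_facts(1)[OF d] p by (metis funpow.simps(2) o_apply)
      then have "\<psi> d = (\<phi> ^^ (fdeg \<alpha> \<sigma> d - 1)) d"
        using ps_ph funpow_in[OF ph_img d] by metis
      then show ?thesis using k 0 unfolding forb_def by auto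
    next
      case (Suc j)
      then have "y = (\<phi> ^^ j) d" using k ps_ph funpow_in[OF ph_img d] by simp
      then show ?thesis unfolding forb_def by auto
    qed
  qed
  have sub1: "{(\<psi> ^^ n) d |n. True} \<subseteq> ?S"
    by (rule orbit_closed_sub[OF clos]) (simp add: vorb_self forb_def, metis funpow_0)
  let ?T = "{(\<psi> ^^ n) d |n. True}"
  have finT: "finite ?T" using sub1 fin d finite_subset by blast
  obtain q where q: "q > 0" "(\<psi> ^^ q) d = d" using orbit_period_exists[OF ps_inj ps_img d finT] by blast
  have clos2: "\<phi> ` ?T \<subseteq> ?T"
  proof
    fix y assume "y \<in> \<phi> ` ?T"
    then obtain k where k: "y = \<phi> ((\<psi> ^^ k) d)" by auto
    show "y \<in> ?T"
    proof (cases k)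
      case 0
      have p: "q = Suc (q - 1)" using q by simp
      have "\<psi> ((\<psi> ^^ (q - 1)) d) = d" using q p by (metis funpow.simps(2) o_apply)
      then have "\<phi> d = (\<psi> ^^ (q - 1)) d" using ph_ps funpow_in[OF ps_img d] by metis
      then show ?thesis using k 0 by auto
    next
      case (Suc j)
      then have "y = (\<psi> ^^ j) d" using k ph_ps funpow_in[OF ps_img d] by simp
      then show ?thesis by auto
    qed
  qed
  have "?S \<subseteq> ?T" unfolding forb_def
    by (rule orbit_closed_sub[OF clos2]) (metis (mono_tags) CollectI funpow_0)
  then show ?thesis using sub1 by blast
qed

end

lemma cyc4:
  assumes "f a = b" "f b = c" "f c = e" "f e = a"
  shows "{(f ^^ n) a |n. True} = {a, b, c, e}"
proof
  have "(f ^^ n) a \<in> {a, b, c, e}" for n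
    by (induct n) (use assms in auto)
  then show "{(f ^^ n) a |n. True} \<subseteq> {a, b, c, e}" by blast
next
  have "a = (f ^^ 0) a" "b = (f ^^ 1) a" "c = (f ^^ 2) a" "e = (f ^^ 3) a"
    using assms by (auto simp: numeral_eq_Suc)
  then show "{a, b, c, e} \<subseteq> {(f ^^ n) a |n. True}" by blast
qed

lemma card4: "snd a \<noteq> snd b \<Longrightarrow> snd a \<noteq> snd c \<Longrightarrow> snd a \<noteq> snd e \<Longrightarrow> snd b \<noteq> snd c
  \<Longrightarrow> snd b \<noteq> snd e \<Longrightarrow> snd c \<noteq> snd e \<Longrightarrow> card {a, b, c, e} = 4"
proof -
  assume "snd a \<noteq> snd b" "snd a \<noteq> snd c" "snd a \<noteq> snd e" "snd b \<noteq> snd c"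
    "snd b \<noteq> snd e" "snd c \<noteq> snd e"
  then have "a \<noteq> b" "a \<noteq> c" "a \<noteq> e" "b \<noteq> c" "b \<noteq> e" "c \<noteq> e" by auto
  then show ?thesis by simp
qed

context M begin

abbreviation "f2 \<equiv> fphi al2 s2"

lemma DD_iff: "(d, i) \<in> DD \<longleftrightarrow> d \<in> D \<and> i \<in> {0, 1, 2, 3}"
  by (auto simp: D2_def)

lemma f2_simps[simp]: "f2 (d, 0) = (d, 2)" "f2 (d, 2) = (\<psi> d, 3)" "f2 (d, 3) = (\<alpha> d, 1)"
  "f2 (d, Suc 0) = (\<sigma> d, 0)"
  by (auto simp: fphi_def)

lemma sg_al_ps: "d \<in> D \<Longrightarrow> \<sigma> (\<alpha> (\<psi> d)) = d"
  using ph_ps[of d] by (simp add: fphi_def)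

lemma ps_sg: "e \<in> D \<Longrightarrow> \<psi> (\<sigma> e) = \<alpha> e"
proof -
  assume e: "e \<in> D"
  have "\<sigma> e = \<phi> (\<alpha> e)" using e al by (simp add: fphi_def)
  then show ?thesis using ps_ph al e by simp
qed

lemma face_cyc:
  assumes "f2 a = b" "f2 b = c" "f2 c = e" "f2 e = a"
    "snd a \<noteq> snd b" "snd a \<noteq> snd c" "snd a \<noteq> snd e" "snd b \<noteq> snd c"
    "snd b \<noteq> snd e" "snd c \<noteq> snd e"
  shows "\<exists>a' b' c' e'. forb al2 s2 a = {a', b', c', e'} \<and> card {a', b', c', e'} = 4 \<and> a' = a \<and>
            f2 a' = b' \<and> f2 b' = c' \<and> f2 c' = e' \<and> f2 e' = a'"
proof -
  have "forb al2 s2 a = {a, b, c, e}" unfolding forb_def by (rule cyc4) (use assms in auto)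
  moreover have "card {a, b, c, e} = 4" by (rule card4) (use assms in auto)
  ultimately show ?thesis using assms(1-4) by blast
qed

lemma face2:
  assumes "x \<in> DD"
  shows "\<exists>a b c e. forb al2 s2 x = {a, b, c, e} \<and> card {a, b, c, e} = 4 \<and> a = x \<and>
            f2 a = b \<and> f2 b = c \<and> f2 c = e \<and> f2 e = a"
proof -
  obtain d i where x: "x = (d, i)" "d \<in> D" "i \<in> {0, 1, 2, 3}" using assms by (cases x) (auto simp: DD_iff)
  have "i = 0 \<or> i = 1 \<or> i = 2 \<or> i = 3" using x by auto
  then show ?thesis
  proof (elim disjE)
    assume i: "i = 0"
    have "f2 (\<alpha> (\<psi> d), 1) = (d, 0)" using sg_al_ps x by simp
    then show ?thesis using x i face_cyc[of "(d,0)" "(d,2)" "(\<psi> d,3)" "(\<alpha> (\<psi> d),1)"] by simp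
  next
    assume i: "i = 2"
    have "f2 (\<alpha> (\<psi> d), 1) = (d, 0)" using sg_al_ps x by simp
    then show ?thesis using x i face_cyc[of "(d,2)" "(\<psi> d,3)" "(\<alpha> (\<psi> d),1)" "(d,0)"] by simp
  next
    assume i: "i = 3"
    have "f2 (\<phi> d, 2) = (d, 3)" using ps_ph x by simp
    moreover have "f2 (\<alpha> d, 1) = (\<phi> d, 0)" by (simp add: fphi_def)
    ultimately show ?thesis using x i face_cyc[of "(d,3)" "(\<alpha> d,1)" "(\<phi> d,0)" "(\<phi> d,2)"] by simp
  next
    assume i: "i = 1"
    have "f2 (\<psi> (\<sigma> d), 3) = (d, 1)" using ps_sg x al by simp
    then show ?thesis using x i face_cyc[of "(d,1)" "(\<sigma> d,0)" "(\<sigma> d,2)" "(\<psi> (\<sigma> d),3)"] by simp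
  qed
qed

lemma fdeg2: "x \<in> DD \<Longrightarrow> fdeg al2 s2 x = 4"
  using face2 unfolding fdeg_def by metis

lemma forb2_fin: "x \<in> DD \<Longrightarrow> finite (forb al2 s2 x)"
  using face2 by (metis finite.emptyI finite.insertI)

lemma vorb2_0: "vorb s2 (d, 0) = (\<lambda>x. (x, 0)) ` vorb \<sigma> d"
proof -
  have "(s2 ^^ n) (d, 0) = ((\<sigma> ^^ n) d, 0)" for n by (induct n) auto
  then show ?thesis unfolding vorb_def by auto
qed

lemma vorb2_1: "d \<in> D \<Longrightarrow> vorb s2 (d, 1) = {(d, 1), (d, 2), (\<alpha> d, 1), (\<alpha> d, 2)}"
  unfolding vorb_def by (rule cyc4) (auto simp: al)

lemma vorb2_2: "d \<in> D \<Longrightarrow> vorb s2 (d, 2) = {(d, 1), (d, 2), (\<alpha> d, 1), (\<alpha> d, 2)}"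
proof -
  assume d: "d \<in> D"
  have "vorb s2 (d, 2) = {(d, 2), (\<alpha> d, 1), (\<alpha> d, 2), (d, 1)}"
    unfolding vorb_def by (rule cyc4) (auto simp: al d)
  then show ?thesis by auto
qed

lemma vorb2_3: "d \<in> D \<Longrightarrow> vorb s2 (d, 3) = (\<lambda>x. (x, 3)) ` forb \<alpha> \<sigma> d"
proof -
  assume d: "d \<in> D"
  have "(s2 ^^ n) (d, 3) = ((\<psi> ^^ n) d, 3)" for n by (induct n) auto
  then have "vorb s2 (d, 3) = (\<lambda>x. (x, 3)) ` {(\<psi> ^^ n) d |n. True}" unfolding vorb_def by auto
  then show ?thesis using ps_orbit[OF d] by simp
qed

lemma vorb2_fin: "x \<in> DD \<Longrightarrow> finite (vorb s2 x)"
proof -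
  assume "x \<in> DD"
  then obtain d i where x: "x = (d, i)" "d \<in> D" "i = 0 \<or> i = 1 \<or> i = 2 \<or> i = 3"
    by (cases x) (auto simp: DD_iff)
  then show ?thesis using fin vorb2_0 vorb2_1 vorb2_2 vorb2_3 by auto
qed

lemma cm2: "is_cmap DD al2 s2"
proof -
  have a: "\<forall>x\<in>DD. al2 x \<in> DD \<and> al2 (al2 x) = x \<and> al2 x \<noteq> x"
    by (auto simp: D2_def al2_def sw_def)
  have img: "s2 ` DD \<subseteq> DD"
    by (auto simp: D2_def sg2_def Let_def sg_D al ps_D)
  have inj: "inj_on s2 DD"
  proof (rule inj_onI)
    fix x y assume xy: "x \<in> DD" "y \<in> DD" "s2 x = s2 y"
    obtain d i where x: "x = (d, i)" "d \<in> D" "i = 0 \<or> i = 1 \<or> i = 2 \<or> i = 3"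
      using xy(1) by (cases x) (auto simp: DD_iff)
    obtain e j where y: "y = (e, j)" "e \<in> D" "j = 0 \<or> j = 1 \<or> j = 2 \<or> j = 3"
      using xy(2) by (cases y) (auto simp: DD_iff)
    show "x = y" using x y xy(3) sg_inj ps_inj al al_inj
      by (auto dest: inj_onD)
  qed
  have surj: "DD \<subseteq> s2 ` DD"
  proof
    fix x assume "x \<in> DD"
    then obtain d i where x: "x = (d, i)" "d \<in> D" "i = 0 \<or> i = 1 \<or> i = 2 \<or> i = 3"
      by (cases x) (auto simp: DD_iff)
    have "i = 0 \<Longrightarrow> x \<in> s2 ` DD"
    proof -
      assume i: "i = 0"
      obtain e where "e \<in> D" "\<sigma> e = d" using sg_bij x by (metis bij_betw_imp_surj_on imageE)
      then show ?thesis using x i by (auto simp: DD_iff intro!: image_eqI[of _ _ "(e, 0)"])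
    qed
    moreover have "i = 1 \<Longrightarrow> x \<in> s2 ` DD"
      using x al by (auto simp: DD_iff intro!: image_eqI[of _ _ "(\<alpha> d, 2)"])
    moreover have "i = 2 \<Longrightarrow> x \<in> s2 ` DD"
      using x by (auto simp: DD_iff intro!: image_eqI[of _ _ "(d, 1)"])
    moreover have "i = 3 \<Longrightarrow> x \<in> s2 ` DD"
      using x ps_ph ph_D by (auto simp: DD_iff intro!: image_eqI[of _ _ "(\<phi> d, 3)"])
    ultimately show "x \<in> s2 ` DD" using x by blast
  qed
  have "bij_betw s2 DD DD" using inj img surj unfolding bij_betw_def by blast
  then show ?thesis using a unfolding is_cmap_def by blast
qed

lemma infinite2: "infinite D \<Longrightarrow> infinite DD"
  unfolding D2_def using finite_cartesian_productD1 by blast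

end

definition Rd :: "'d \<times> nat \<Rightarrow> ('d \<times> nat) list" where
  "Rd x = (if snd x = 0 then [] else if snd x = 3 then [(fst x, 3), (fst x, 1)] else [(fst x, 1)])"

definition lam :: "('d \<Rightarrow> 'd) \<Rightarrow> 'd list \<Rightarrow> ('d \<times> nat) list" where
  "lam \<alpha> Q = concat (map (\<lambda>d. [(d, 0), (\<alpha> d, 1)]) Q)"

lemma lam_simps[simp]: "lam \<alpha> [] = []" "lam \<alpha> (d # Q) = [(d, 0), (\<alpha> d, 1)] @ lam \<alpha> Q"
  "lam \<alpha> (xs @ ys) = lam \<alpha> xs @ lam \<alpha> ys"
  by (auto simp: lam_def)

lemma al2_one[simp]: "al2 (d, 1) = (d, 0)" by (simp add: al2_def sw_def)

lemma length_lam: "length (lam \<alpha> Q) = 2 * length Q"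
  by (induct Q) auto

context M begin

abbreviation "W2 \<equiv> is_walk DD al2 s2"
abbreviation "H2 \<equiv> hom DD al2 s2"
abbreviation "W \<equiv> is_walk D \<alpha> \<sigma>"
abbreviation "V0 d \<equiv> vorb s2 (d, 0)"

lemma al2_all: "\<forall>x\<in>DD. al2 x \<in> DD \<and> al2 (al2 x) = x"
  using cm2 unfolding is_cmap_def by blast

lemma inDD[simp]: "d \<in> D \<Longrightarrow> (d, 0) \<in> DD" "d \<in> D \<Longrightarrow> (d, Suc 0) \<in> DD"
  "d \<in> D \<Longrightarrow> (d, 2) \<in> DD" "d \<in> D \<Longrightarrow> (d, 3) \<in> DD"
  by (auto simp: D2_def)

lemma v12: "d \<in> D \<Longrightarrow> vorb s2 (d, 2) = vorb s2 (d, 1)"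
  using vorb2_1 vorb2_2 by simp
lemma v1a: "d \<in> D \<Longrightarrow> vorb s2 (\<alpha> d, 1) = vorb s2 (d, 1)"
  using vorb2_1 al by (simp add: insert_commute)
lemma v2a: "d \<in> D \<Longrightarrow> vorb s2 (\<alpha> d, 2) = vorb s2 (d, 1)"
  using v12 v1a al by simp
lemma v0sg: "d \<in> D \<Longrightarrow> vorb s2 (\<sigma> d, 0) = vorb s2 (d, 0)"
  using vorb2_0 vorb_sg by simp
lemma v0mem: "d \<in> D \<Longrightarrow> e \<in> vorb \<sigma> d \<Longrightarrow> vorb s2 (e, 0) = vorb s2 (d, 0)"
  using vorb2_0 vorb_mem_eq by simp
lemma v3mem: "d \<in> D \<Longrightarrow> e \<in> forb \<alpha> \<sigma> d \<Longrightarrow> vorb s2 (e, 3) = vorb s2 (d, 3)"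
  using vorb2_3 forb_mem_eq forb_in_D by metis
lemma forb_ph: "d \<in> D \<Longrightarrow> (\<phi> ^^ n) d \<in> forb \<alpha> \<sigma> d"
  unfolding forb_def by blast
lemma v0ph: "c \<in> D \<Longrightarrow> vorb s2 (\<alpha> c, 0) = vorb s2 (\<phi> c, 0)"
  using v0sg[of "\<alpha> c"] al by (simp add: fphi_def)

lemma Rd_walk: "x \<in> DD \<Longrightarrow> W2 (vorb s2 x) (Rd x) (V0 (fst x))"
proof -
  assume "x \<in> DD"
  then obtain d i where x: "x = (d, i)" "d \<in> D" "i = 0 \<or> i = 1 \<or> i = 2 \<or> i = 3"
    by (cases x) (auto simp: DD_iff)
  then show ?thesis using v12[of d] by (auto simp: Rd_def)
qed

lemma lam_walk: "W u Q v \<Longrightarrow> W2 ((\<lambda>x. (x, 0)) ` u) (lam \<alpha> Q) ((\<lambda>x. (x, 0)) ` v)"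
proof (induct Q arbitrary: u)
  case Nil then show ?case by simp
next
  case (Cons d Q)
  then have d: "d \<in> D" "vorb \<sigma> d = u" "W (vorb \<sigma> (\<alpha> d)) Q v" by auto
  have "W2 (vorb s2 (\<alpha> d, 0)) (lam \<alpha> Q) ((\<lambda>x. (x, 0)) ` v)" using Cons d vorb2_0 by simp
  then show ?case using d al v1a[of d] vorb2_0 by simp
qed

lemma lam_walk': "d \<in> D \<Longrightarrow> e \<in> D \<Longrightarrow> W (vorb \<sigma> d) Q (vorb \<sigma> e) \<Longrightarrow> W2 (V0 d) (lam \<alpha> Q) (V0 e)"
  using lam_walk vorb2_0 by metis

lemma DL: "x \<in> DD \<Longrightarrow> H2 (V0 (fst x)) (V0 (fst x)) (rw al2 (Rd x) @ [x] @ Rd (al2 x)) []"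
proof -
  assume "x \<in> DD"
  then obtain d i where x: "x = (d, i)" "d \<in> D" "i = 0 \<or> i = 1 \<or> i = 2 \<or> i = 3"
    by (cases x) (auto simp: DD_iff)
  have b0: "H2 (V0 d) (V0 d) [(d, 0), (d, 1)] []"
    using hom_back0[OF al2_all, of s2 "V0 d" "(d,0)" "V0 d"] x by simp
  have b1: "H2 (V0 d) (V0 d) [(d, 0), (d, 2), (d, 3), (d, 1)] [(d, 0), (d, 1)]"
    using hom_back[OF al2_all, of s2 "V0 d" "[(d,0)]" "(d,2)" "[(d,1)]" "V0 d"] x v12[of d] by simp
  have "H2 (V0 d) (V0 d) [(d, 0), (d, 2), (d, 3), (d, 1)] []"
    using hom_trans[OF b1 b0] by simp
  then show ?thesis using x b0 by (auto simp: Rd_def al2_def sw_def rw_def)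
qed

lemma fw_lemma: "c \<in> D \<Longrightarrow> facewalk al2 s2 (c, 0) = [(c, 0), (c, 2), (\<psi> c, 3), (\<alpha> (\<psi> c), 1)]"
proof -
  assume c: "c \<in> D"
  have s: "f2 (x, Suc (Suc 0)) = (\<psi> x, Suc (Suc (Suc 0)))" "f2 (x, Suc (Suc (Suc 0))) = (\<alpha> x, Suc 0)"
    for x using f2_simps(2,3)[of x] by (simp_all add: numeral_eq_Suc)
  have u: "[0..<4] = [0, 1, 2, 3::nat]" by (simp add: upt_rec)
  have "(f2 ^^ 1) (c, 0) = (c, 2)" "(f2 ^^ 2) (c, 0) = (\<psi> c, 3)" "(f2 ^^ 3) (c, 0) = (\<alpha> (\<psi> c), 1)"
    using s by (simp_all add: numeral_3_eq_3 numeral_2_eq_2)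
  then show ?thesis using fdeg2[of "(c, 0)"] c u
    by (simp add: facewalk_def)
qed

lemma prefix_walk:
  assumes d: "d \<in> D"
  shows "W (vorb \<sigma> d) (map (\<lambda>i. (\<phi> ^^ i) d) [0..<n]) (vorb \<sigma> ((\<phi> ^^ n) d))"
proof (induct n)
  case 0 then show ?case by simp
next
  case (Suc n)
  let ?c = "(\<phi> ^^ n) d"
  have c: "?c \<in> D" using funpow_in[OF ph_img d] .
  have "vorb \<sigma> (\<alpha> ?c) = vorb \<sigma> (\<phi> ?c)" using vorb_sg[of "\<alpha> ?c"] al c by (simp add: fphi_def)
  then have "W (vorb \<sigma> ?c) [?c] (vorb \<sigma> ((\<phi> ^^ Suc n) d))" using c by simp
  then show ?case using Suc walk_appendI by fastforce
qed

lemma CL_step: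
  assumes d: "d \<in> D" and c: "c \<in> D" and v3c: "vorb s2 (c, 3) = vorb s2 (d, 3)"
    and IH: "H2 (V0 d) (V0 c) [(d, 0), (d, 2), (c, 3), (c, 1)] P"
  shows "H2 (V0 d) (V0 (\<phi> c)) [(d, 0), (d, 2), (\<phi> c, 3), (\<phi> c, 1)] (P @ [(c, 0), (\<alpha> c, 1)])"
proof -
  define c' where "c' = \<phi> c"
  have c': "c' \<in> D" using ph_D c c'_def by simp
  have psc: "\<psi> c' = c" using ps_ph c c'_def by simp
  have v3c': "vorb s2 (c', 3) = vorb s2 (d, 3)"
  proof -
    have "c' \<in> forb \<alpha> \<sigma> c" using forb_ph[OF c, of 1] c'_def by simp
    then show ?thesis using v3mem[OF c] v3c by simp
  qed
  have vac: "vorb s2 (\<alpha> c, 0) = V0 c'" using v0ph[OF c] c'_def by simp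
  have A: "W2 (V0 d) [(d, 0), (d, 2), (c, 3), (c, 1)] (V0 c)"
    using d c v12[of c] v12[of d] v3c by simp
  have E: "W2 (V0 c) [(c, 0), (\<alpha> c, 1)] (V0 c')"
    using c al v1a[of c] vac by simp
  have s1: "H2 (V0 d) (V0 c') ([(d, 0), (d, 2), (c, 3), (c, 1)] @ [(c, 0), (\<alpha> c, 1)])
              (P @ [(c, 0), (\<alpha> c, 1)])"
    by (rule hom_app[OF IH hom_refl A E])
  have AE: "W2 (V0 d) [(d, 0), (d, 2), (c, 3), (c, 1), (c, 0), (\<alpha> c, 1)] (V0 c')"
    using walk_appendI[OF A E] by (simp only: append_Cons append_Nil)
  have s2: "H2 (V0 d) (V0 c') [(d, 0), (d, 2), (c, 3), (c, 1), (c, 0), (\<alpha> c, 1)]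
              [(d, 0), (d, 2), (c, 3), (\<alpha> c, 1)]"
    using hom_back[OF al2_all, of s2 "V0 d" "[(d, 0), (d, 2), (c, 3)]" "(c, 1)" "[(\<alpha> c, 1)]" "V0 c'"] AE
    by (simp only: append_Cons append_Nil al2_one)
  have fw: "facewalk al2 s2 (c', 0) = [(c', 0), (c', 2), (c, 3), (\<alpha> c, 1)]"
    using fw_lemma[OF c'] psc by simp
  have G1: "W2 (vorb s2 (d, 3)) [(c', 3), (c', 1)] (V0 c')"
    using c' v3c' v12 by simp
  have Gf: "W2 (V0 c') [(c', 0), (c', 2), (c, 3), (\<alpha> c, 1)] (V0 c')"
    using c' c v12 v3c v3c' psc al v1a[of c] vac by simp
  have GG: "W2 (vorb s2 (d, 3)) [(c', 3), (c', 1), (c', 0), (c', 2), (c, 3), (\<alpha> c, 1)] (V0 c')"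
    using walk_appendI[OF G1 Gf] by (simp only: append_Cons append_Nil)
  have t1: "H2 (vorb s2 (d, 3)) (V0 c') [(c', 3), (c', 1), (c', 0), (c', 2), (c, 3), (\<alpha> c, 1)]
              [(c', 3), (c', 1)]"
  proof (rule hom_stepI[OF GG G1])
    have "hstep DD al2 s2 ([(c', 3), (c', 1)] @ []) ([(c', 3), (c', 1)] @ facewalk al2 s2 (c', 0) @ [])"
      unfolding hstep_def
      by (rule exI[of _ "[(c', 3), (c', 1)]"], rule exI[of _ "[]"], rule exI[of _ "(c', 0)"]) (use c' in simp)
    then show "hstep DD al2 s2 [(c', 3), (c', 1), (c', 0), (c', 2), (c, 3), (\<alpha> c, 1)] [(c', 3), (c', 1)] \<or>
      hstep DD al2 s2 [(c', 3), (c', 1)] [(c', 3), (c', 1), (c', 0), (c', 2), (c, 3), (\<alpha> c, 1)]"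
      using fw by simp
  qed
  have t2: "H2 (vorb s2 (d, 3)) (V0 c') [(c', 3), (c', 1), (c', 0), (c', 2), (c, 3), (\<alpha> c, 1)]
              [(c', 3), (c', 2), (c, 3), (\<alpha> c, 1)]"
    using hom_back[OF al2_all, of s2 "vorb s2 (d, 3)" "[(c', 3)]" "(c', 1)" "[(c', 2), (c, 3), (\<alpha> c, 1)]" "V0 c'"] GG
    by (simp only: append_Cons append_Nil al2_one)
  have W3: "W2 (vorb s2 (d, 3)) [(c', 3), (c', 2), (c, 3), (\<alpha> c, 1)] (V0 c')"
    using hom_walk[OF t2 GG] .
  have t3: "H2 (vorb s2 (d, 3)) (V0 c') [(c', 3), (c', 2), (c, 3), (\<alpha> c, 1)]
              [(c, 3), (\<alpha> c, 1)]"
    using hom_back[OF al2_all, of s2 "vorb s2 (d, 3)" "[]" "(c', 3)" "[(c, 3), (\<alpha> c, 1)]" "V0 c'"] W3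
    by (simp only: append_Cons append_Nil al2_simps)
  have inner: "H2 (vorb s2 (d, 3)) (V0 c') [(c, 3), (\<alpha> c, 1)] [(c', 3), (c', 1)]"
    using hom_trans[OF hom_sym[OF hom_trans[OF t2 t3]] t1] .
  have s3: "H2 (V0 d) (V0 c') ([(d, 0), (d, 2)] @ [(c, 3), (\<alpha> c, 1)] @ [])
              ([(d, 0), (d, 2)] @ [(c', 3), (c', 1)] @ [])"
    by (rule hom_ctx[OF inner]) (use d v12 in simp_all)
  have "H2 (V0 d) (V0 c') [(d, 0), (d, 2), (c', 3), (c', 1)] (P @ [(c, 0), (\<alpha> c, 1)])"
  proof -
    have x1: "H2 (V0 d) (V0 c') [(d, 0), (d, 2), (c', 3), (c', 1)] [(d, 0), (d, 2), (c, 3), (\<alpha> c, 1)]"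
      using hom_sym[OF s3] by simp
    have x2: "H2 (V0 d) (V0 c') [(d, 0), (d, 2), (c, 3), (\<alpha> c, 1)] ([(d, 0), (d, 2), (c, 3), (c, 1)] @ [(c, 0), (\<alpha> c, 1)])"
      using hom_sym[OF s2] by simp
    show ?thesis using hom_trans[OF hom_trans[OF x1 x2] s1] .
  qed
  then show ?thesis using c'_def by simp
qed

lemma CL:
  assumes d: "d \<in> D"
  shows "H2 (V0 d) (V0 ((\<phi> ^^ n) d)) [(d, 0), (d, 2), ((\<phi> ^^ n) d, 3), ((\<phi> ^^ n) d, 1)]
           (lam \<alpha> (map (\<lambda>i. (\<phi> ^^ i) d) [0..<n]))"
proof (induct n)
  case 0
  have b0: "H2 (V0 d) (V0 d) [(d, 0), (d, 1)] []"
    using hom_back0[OF al2_all, of s2 "V0 d" "(d,0)" "V0 d"] d by simp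
  have b1: "H2 (V0 d) (V0 d) [(d, 0), (d, 2), (d, 3), (d, 1)] [(d, 0), (d, 1)]"
    using hom_back[OF al2_all, of s2 "V0 d" "[(d,0)]" "(d,2)" "[(d,1)]" "V0 d"] d v12[of d] by simp
  show ?case using hom_trans[OF b1 b0] by simp
next
  case (Suc n)
  have c: "(\<phi> ^^ n) d \<in> D" using funpow_in[OF ph_img d] .
  have v3c: "vorb s2 ((\<phi> ^^ n) d, 3) = vorb s2 (d, 3)" using v3mem[OF d forb_ph[OF d]] .
  show ?case using CL_step[OF d c v3c Suc] by simp
qed
end

lemma Rd_simps[simp]: "Rd (d, 0) = []" "Rd (d, Suc 0) = [(d, 1)]" "Rd (d, 1) = [(d, 1)]"
  "Rd (d, 2) = [(d, 1)]" "Rd (d, 3) = [(d, 3), (d, 1)]"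
  by (auto simp: Rd_def)

lemma walk_det: "is_walk D \<alpha> \<sigma> u w v \<Longrightarrow> is_walk D \<alpha> \<sigma> u w v' \<Longrightarrow> v = v'"
  by (induct w arbitrary: u) auto

context M begin

lemma vorb2_self: "x \<in> vorb s2 x" unfolding vorb_def by (metis (mono_tags) CollectI funpow_0)

lemma CR:
  assumes F: "\<forall>d\<in>D. fdeg \<alpha> \<sigma> d \<le> F" "1 \<le> F"
    and x: "x \<in> DD" and y: "y \<in> DD" and xy: "vorb s2 x = vorb s2 y"
  shows "\<exists>Q. W (vorb \<sigma> (fst x)) Q (vorb \<sigma> (fst y)) \<and> length Q \<le> F \<and>
           H2 (V0 (fst x)) (V0 (fst y)) (rw al2 (Rd x) @ Rd y) (lam \<alpha> Q)"
proof -
  obtain d i where xd: "x = (d, i)" "d \<in> D" "i = 0 \<or> i = 1 \<or> i = 2 \<or> i = 3"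
    using x by (cases x) (auto simp: DD_iff)
  have ymem: "y \<in> vorb s2 x" using xy vorb2_self by metis
  consider "i = 0" | "i = 1 \<or> i = 2" | "i = 3" using xd by blast
  then show ?thesis
  proof cases
    case 1
    then have i: "i = 0" .
    then obtain e where e: "y = (e, 0)" "e \<in> vorb \<sigma> d" using ymem xd vorb2_0 by auto
    have "vorb \<sigma> e = vorb \<sigma> d" using vorb_mem_eq xd e by simp
    then show ?thesis using xd i e by (intro exI[of _ "[]"]) simp
  next
    case 2
    then have i: "i = 1 \<or> i = 2" .
    then have ym: "y \<in> {(d, 1), (d, 2), (\<alpha> d, 1), (\<alpha> d, 2)}"
      using ymem xd vorb2_1 vorb2_2 by auto
    have rx: "rw al2 (Rd x) = [(d, 0)]" using i xd by (auto simp: rw_def)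
    have b0: "H2 (V0 d) (V0 d) [(d, 0), (d, 1)] []"
      using hom_back0[OF al2_all, of s2 "V0 d" "(d,0)" "V0 d"] xd by simp
    have "y = (d, 1) \<or> y = (d, 2) \<or> y = (\<alpha> d, 1) \<or> y = (\<alpha> d, 2)" using ym by simp
    then show ?thesis
    proof (elim disjE)
      assume "y = (d, 1)" then show ?thesis using rx b0 xd F by (intro exI[of _ "[]"]) simp
    next
      assume "y = (d, 2)" then show ?thesis using rx b0 xd F by (intro exI[of _ "[]"]) simp
    next
      assume "y = (\<alpha> d, 1)" then show ?thesis using rx xd F al by (intro exI[of _ "[d]"]) simp
    next
      assume "y = (\<alpha> d, 2)" then show ?thesis using rx xd F al by (intro exI[of _ "[d]"]) simp
    qed
  next
    case 3
    then have i: "i = 3" .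
    then obtain e where e: "y = (e, 3)" "e \<in> forb \<alpha> \<sigma> d" using ymem xd vorb2_3 by auto
    then obtain k where k: "k < fdeg \<alpha> \<sigma> d" "e = (\<phi> ^^ k) d" using forb_facts(2)[OF xd(2)] by auto
    have rx: "rw al2 (Rd x) = [(d, 0), (d, 2)]" using i xd by (auto simp: rw_def)
    have "H2 (V0 d) (V0 e) (rw al2 (Rd x) @ Rd y) (lam \<alpha> (map (\<lambda>i. (\<phi> ^^ i) d) [0..<k]))"
      using CL[OF xd(2), of k] rx e k by simp
    moreover have "W (vorb \<sigma> d) (map (\<lambda>i. (\<phi> ^^ i) d) [0..<k]) (vorb \<sigma> e)"
      using prefix_walk[OF xd(2)] k by simp
    moreover have "length (map (\<lambda>i. (\<phi> ^^ i) d) [0..<k]) \<le> F" using k F xd by fastforce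
    ultimately show ?thesis using xd e by (intro exI[of _ "map (\<lambda>i. (\<phi> ^^ i) d) [0..<k]"]) simp
  qed
qed

lemma Rd_walk': "x \<in> DD \<Longrightarrow> vorb s2 x = u \<Longrightarrow> W2 u (Rd x) (V0 (fst x))"
  using Rd_walk by blast

lemma rRd_walk: "x \<in> DD \<Longrightarrow> W2 (V0 (fst x)) (rw al2 (Rd x)) (vorb s2 x)"
  using walk_rw[OF al2_all Rd_walk] by blast

lemma fst_al2[simp]: "fst (al2 x) = fst x" by (simp add: al2_def)

lemma PR:
  assumes F: "\<forall>d\<in>D. fdeg \<alpha> \<sigma> d \<le> F" "1 \<le> F"
  shows "x \<in> DD \<Longrightarrow> y \<in> DD \<Longrightarrow> W2 (vorb s2 x) w (vorb s2 y) \<Longrightarrow>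
    \<exists>Q. W (vorb \<sigma> (fst x)) Q (vorb \<sigma> (fst y)) \<and> length Q \<le> F * (length w + 1) \<and>
        H2 (V0 (fst x)) (V0 (fst y)) (rw al2 (Rd x) @ w @ Rd y) (lam \<alpha> Q)"
proof (induct w arbitrary: x)
  case Nil
  then show ?case using CR[OF F Nil(1,2)] by simp
next
  case (Cons e w)
  have e: "e \<in> DD" "vorb s2 e = vorb s2 x" "W2 (vorb s2 (al2 e)) w (vorb s2 y)" using Cons.prems by auto
  have ae: "al2 e \<in> DD" using al2_all e by blast
  obtain Q2 where Q2: "W (vorb \<sigma> (fst e)) Q2 (vorb \<sigma> (fst y))" "length Q2 \<le> F * (length w + 1)"
    "H2 (V0 (fst e)) (V0 (fst y)) (rw al2 (Rd (al2 e)) @ w @ Rd y) (lam \<alpha> Q2)"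
    using Cons.hyps[OF ae Cons.prems(2) e(3)] by auto
  obtain Q1 where Q1: "W (vorb \<sigma> (fst x)) Q1 (vorb \<sigma> (fst e))" "length Q1 \<le> F"
    "H2 (V0 (fst x)) (V0 (fst e)) (rw al2 (Rd x) @ Rd e) (lam \<alpha> Q1)"
    using CR[OF F Cons.prems(1) e(1) e(2)[symmetric]] by auto
  have dl: "H2 (V0 (fst e)) (V0 (fst e)) (rw al2 (Rd e) @ [e] @ Rd (al2 e)) []" using DL[OF e(1)] .
  have wx: "W2 (V0 (fst x)) (rw al2 (Rd x)) (vorb s2 x)" using rRd_walk[OF Cons.prems(1)] .
  have we: "W2 (vorb s2 x) (Rd e) (V0 (fst e))" using Rd_walk[OF e(1)] e(2) by simp
  have wre: "W2 (V0 (fst e)) (rw al2 (Rd e)) (vorb s2 x)" using rRd_walk[OF e(1)] e(2) by simp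
  have wee: "W2 (vorb s2 x) [e] (vorb s2 (al2 e))" using e by simp
  have wae: "W2 (vorb s2 (al2 e)) (Rd (al2 e)) (V0 (fst e))" using Rd_walk[OF ae] by simp
  have wrae: "W2 (V0 (fst e)) (rw al2 (Rd (al2 e))) (vorb s2 (al2 e))" using rRd_walk[OF ae] by simp
  have wy: "W2 (vorb s2 y) (Rd y) (V0 (fst y))" using Rd_walk[OF Cons.prems(2)] .
  have X1: "W2 (V0 (fst x)) (rw al2 (Rd x) @ Rd e) (V0 (fst e))" using wx we walk_appendI by metis
  have X2: "W2 (V0 (fst e)) (rw al2 (Rd e) @ [e] @ Rd (al2 e)) (V0 (fst e))"
    using wre wee wae walk_appendI by metis
  have X3: "W2 (V0 (fst e)) (rw al2 (Rd (al2 e)) @ w @ Rd y) (V0 (fst y))"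
    using wrae e(3) wy walk_appendI by metis
  have h1: "H2 (V0 (fst x)) (V0 (fst y)) ((rw al2 (Rd x) @ Rd e) @ ((rw al2 (Rd e) @ [e] @ Rd (al2 e)) @
      (rw al2 (Rd (al2 e)) @ w @ Rd y))) (lam \<alpha> Q1 @ ([] @ lam \<alpha> Q2))"
    by (rule hom_app[OF Q1(3) hom_app[OF dl Q2(3) X2 X3] X1 walk_appendI[OF X2 X3]])
  have c1: "H2 (vorb s2 x) (vorb s2 x) (Rd e @ rw al2 (Rd e)) []"
    using hom_rw_cancel[OF al2_all we] .
  have c2: "H2 (vorb s2 (al2 e)) (vorb s2 (al2 e)) (Rd (al2 e) @ rw al2 (Rd (al2 e))) []"
    using hom_rw_cancel[OF al2_all wae] .
  have q1: "W2 (vorb s2 x) ([e] @ Rd (al2 e) @ rw al2 (Rd (al2 e)) @ w @ Rd y) (V0 (fst y))"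
    using wee wae wrae e(3) wy walk_appendI by metis
  have h2: "H2 (V0 (fst x)) (V0 (fst y)) (rw al2 (Rd x) @ (Rd e @ rw al2 (Rd e)) @ ([e] @ Rd (al2 e) @ rw al2 (Rd (al2 e)) @ w @ Rd y))
      (rw al2 (Rd x) @ [] @ ([e] @ Rd (al2 e) @ rw al2 (Rd (al2 e)) @ w @ Rd y))"
    by (rule hom_ctx[OF c1 wx q1])
  have p2: "W2 (V0 (fst x)) (rw al2 (Rd x) @ [e]) (vorb s2 (al2 e))" using wx wee walk_appendI by metis
  have q2: "W2 (vorb s2 (al2 e)) (w @ Rd y) (V0 (fst y))" using e(3) wy walk_appendI by metis
  have h3: "H2 (V0 (fst x)) (V0 (fst y)) ((rw al2 (Rd x) @ [e]) @ (Rd (al2 e) @ rw al2 (Rd (al2 e))) @ (w @ Rd y))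
      ((rw al2 (Rd x) @ [e]) @ [] @ (w @ Rd y))"
    by (rule hom_ctx[OF c2 p2 q2])
  have h23: "H2 (V0 (fst x)) (V0 (fst y)) (rw al2 (Rd x) @ (Rd e @ rw al2 (Rd e)) @ ([e] @ Rd (al2 e) @ rw al2 (Rd (al2 e)) @ w @ Rd y))
      (rw al2 (Rd x) @ (e # w) @ Rd y)"
    using hom_trans[OF h2[simplified] h3[simplified]] by simp
  have "H2 (V0 (fst x)) (V0 (fst y)) (rw al2 (Rd x) @ (e # w) @ Rd y) (lam \<alpha> (Q1 @ Q2))"
    using hom_trans[OF hom_sym[OF h23[simplified]] h1[simplified]] by simp
  moreover have "W (vorb \<sigma> (fst x)) (Q1 @ Q2) (vorb \<sigma> (fst y))" using Q1 Q2 walk_appendI by metis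
  moreover have "length (Q1 @ Q2) \<le> F * (length (e # w) + 1)" using Q1 Q2 by simp
  ultimately show ?case by blast
qed

end

context M begin

abbreviation lv :: "'d set \<Rightarrow> ('d \<times> nat) set" where "lv u \<equiv> (\<lambda>x. (x, 0)) ` u"

lemma lv_vorb: "lv (vorb \<sigma> d) = V0 d" using vorb2_0 by simp

lemma LS:
  assumes wy: "W u y v" and wz: "W u z v" and hs: "hstep D \<alpha> \<sigma> y z"
  shows "H2 (lv u) (lv v) (lam \<alpha> z) (lam \<alpha> y)"
proof -
  obtain xs ys d where d: "d \<in> D" "y = xs @ ys"
    and zz: "z = xs @ [d, \<alpha> d] @ ys \<or> z = xs @ facewalk \<alpha> \<sigma> d @ ys"
    using hs unfolding hstep_def by blast
  obtain m where m: "W u xs m" "W m ys v" using wy d(2) walk_append by metis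
  have pw: "W2 (lv u) (lam \<alpha> xs) (lv m)" using lam_walk[OF m(1)] .
  have qw: "W2 (lv m) (lam \<alpha> ys) (lv v)" using lam_walk[OF m(2)] .
  from zz show ?thesis
  proof
    assume z: "z = xs @ [d, \<alpha> d] @ ys"
    obtain m1 m2 where mm: "W u xs m1" "W m1 [d, \<alpha> d] m2" "W m2 ys v"
      using wz z walk_append by metis
    have m1: "m1 = m" using walk_det mm(1) m(1) by metis
    have md: "m = vorb \<sigma> d" using mm(2) m1 by simp
    have inw: "W2 (V0 d) [(d, 0), (\<alpha> d, 1), (\<alpha> d, 0), (d, 1)] (V0 d)"
    proof -
      have "W m [d, \<alpha> d] m" using d al md by simp
      from lam_walk[OF this] have "W2 (lv m) (lam \<alpha> [d, \<alpha> d]) (lv m)" .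
      moreover have "lam \<alpha> [d, \<alpha> d] = [(d, 0), (\<alpha> d, 1), (\<alpha> d, 0), (d, 1)]" using al d by simp
      ultimately show ?thesis using md lv_vorb by metis
    qed
    have i1: "H2 (V0 d) (V0 d) [(d, 0), (\<alpha> d, 1), (\<alpha> d, 0), (d, 1)] [(d, 0), (d, 1)]"
      using hom_back[OF al2_all, of s2 "V0 d" "[(d, 0)]" "(\<alpha> d, 1)" "[(d, 1)]" "V0 d"] inw
      by (simp only: append_Cons append_Nil al2_one)
    have i2: "H2 (V0 d) (V0 d) [(d, 0), (d, 1)] []"
      using hom_back0[OF al2_all, of s2 "V0 d" "(d,0)" "V0 d"] d by simp
    have inner: "H2 (lv m) (lv m) (lam \<alpha> [d, \<alpha> d]) []"
    proof -
      have "lam \<alpha> [d, \<alpha> d] = [(d, 0), (\<alpha> d, 1), (\<alpha> d, 0), (d, 1)]" using al d by simp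
      then show ?thesis using hom_trans[OF i1 i2] md lv_vorb by metis
    qed
    have "H2 (lv u) (lv v) (lam \<alpha> xs @ lam \<alpha> [d, \<alpha> d] @ lam \<alpha> ys) (lam \<alpha> xs @ [] @ lam \<alpha> ys)"
      by (rule hom_ctx[OF inner pw qw])
    then show ?thesis using z d(2) by simp
  next
    assume z: "z = xs @ facewalk \<alpha> \<sigma> d @ ys"
    obtain m1 m2 where mm: "W u xs m1" "W m1 (facewalk \<alpha> \<sigma> d) m2" "W m2 ys v"
      using wz z walk_append by metis
    have m1: "m1 = m" using walk_det mm(1) m(1) by metis
    have fw: "facewalk \<alpha> \<sigma> d = map (\<lambda>i. (\<phi> ^^ i) d) [0..<fdeg \<alpha> \<sigma> d]"
      unfolding facewalk_def by simp
    have "[0..<fdeg \<alpha> \<sigma> d] = 0 # [1..<fdeg \<alpha> \<sigma> d]"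
      using forb_facts(3)[OF d(1)] upt_conv_Cons by simp
    then have "facewalk \<alpha> \<sigma> d = d # map (\<lambda>i. (\<phi> ^^ i) d) [1..<fdeg \<alpha> \<sigma> d]"
      using fw by simp
    then obtain rest where rest: "facewalk \<alpha> \<sigma> d = d # rest" by blast
    have md: "m = vorb \<sigma> d"
    proof -
      have "W m1 (d # rest) m2" using mm(2) rest by simp
      then have "vorb \<sigma> d = m1" by (simp only: is_walk.simps)
      then show ?thesis using m1 by simp
    qed
    have k: "(\<phi> ^^ fdeg \<alpha> \<sigma> d) d = d" using forb_facts(1)[OF d(1)] .
    have c1: "H2 (V0 d) (V0 d) [(d, 0), (d, 2), (d, 3), (d, 1)] (lam \<alpha> (facewalk \<alpha> \<sigma> d))"
      using CL[OF d(1), of "fdeg \<alpha> \<sigma> d"] unfolding k fw[symmetric] .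
    have c0: "H2 (V0 d) (V0 d) [(d, 0), (d, 2), (d, 3), (d, 1)] []"
      using CL[OF d(1), of 0] by (simp only: funpow_0 upt_0 list.map lam_simps(1))
    have inner: "H2 (lv m) (lv m) (lam \<alpha> (facewalk \<alpha> \<sigma> d)) []"
      unfolding md lv_vorb by (rule hom_trans[OF hom_sym[OF c1] c0])
    have "H2 (lv u) (lv v) (lam \<alpha> xs @ lam \<alpha> (facewalk \<alpha> \<sigma> d) @ lam \<alpha> ys) (lam \<alpha> xs @ [] @ lam \<alpha> ys)"
      by (rule hom_ctx[OF inner pw qw])
    then show ?thesis using z d(2) by (simp only: lam_simps append_Nil)
  qed
qed

lemma LT:
  assumes "hom D \<alpha> \<sigma> u v Q Q'"
  shows "H2 (lv u) (lv v) (lam \<alpha> Q) (lam \<alpha> Q')"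
  using assms unfolding hom_def[of D]
proof (induct rule: rtrancl_induct)
  case base then show ?case by simp
next
  case (step b c)
  then have bc: "W u b v" "W u c v" "hstep D \<alpha> \<sigma> b c \<or> hstep D \<alpha> \<sigma> c b" unfolding hrel_def by auto
  have "H2 (lv u) (lv v) (lam \<alpha> b) (lam \<alpha> c)"
    using bc LS hom_sym by metis
  then show ?case using step(3) hom_trans by metis
qed

lemma SC2:
  assumes F: "\<forall>d\<in>D. fdeg \<alpha> \<sigma> d \<le> F" "1 \<le> F"
    and sc: "simply_connected_map D \<alpha> \<sigma>"
  shows "simply_connected_map DD al2 s2"
  unfolding simply_connected_map_def
proof (intro ballI allI impI)
  fix u w assume u: "u \<in> verts DD s2" and w: "W2 u w u"
  obtain a where a: "a \<in> DD" "u = vorb s2 a" using u unfolding verts_def by blast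
  have fa: "fst a \<in> D" using a by (auto simp: D2_def)
  obtain Q where Q: "W (vorb \<sigma> (fst a)) Q (vorb \<sigma> (fst a))"
    "H2 (V0 (fst a)) (V0 (fst a)) (rw al2 (Rd a) @ w @ Rd a) (lam \<alpha> Q)"
    using PR[OF F a(1) a(1)] w a(2) by blast
  have "vorb \<sigma> (fst a) \<in> verts D \<sigma>" using fa unfolding verts_def by blast
  then have "hom D \<alpha> \<sigma> (vorb \<sigma> (fst a)) (vorb \<sigma> (fst a)) Q []"
    using sc Q(1) unfolding simply_connected_map_def hom_def homot_rel_eq by blast
  from LT[OF this] have "H2 (V0 (fst a)) (V0 (fst a)) (lam \<alpha> Q) []" using lv_vorb by simp
  then have X: "H2 (V0 (fst a)) (V0 (fst a)) (rw al2 (Rd a) @ w @ Rd a) []"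
    by (rule hom_trans[OF Q(2)])
  have ra: "W2 u (Rd a) (V0 (fst a))" using Rd_walk[OF a(1)] a(2) by simp
  have rra: "W2 (V0 (fst a)) (rw al2 (Rd a)) u" using rRd_walk[OF a(1)] a(2) by simp
  have h1: "H2 u u (Rd a @ (rw al2 (Rd a) @ w @ Rd a) @ rw al2 (Rd a)) (Rd a @ [] @ rw al2 (Rd a))"
    by (rule hom_ctx[OF X ra rra])
  have can: "H2 u u (Rd a @ rw al2 (Rd a)) []" using hom_rw_cancel[OF al2_all ra] .
  have q1: "W2 u (w @ Rd a @ rw al2 (Rd a)) u" using w ra rra walk_appendI by metis
  have h2: "H2 u u ([] @ (Rd a @ rw al2 (Rd a)) @ (w @ Rd a @ rw al2 (Rd a))) ([] @ [] @ (w @ Rd a @ rw al2 (Rd a)))"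
    by (rule hom_ctx[OF can _ q1]) simp
  have h3: "H2 u u (w @ (Rd a @ rw al2 (Rd a)) @ []) (w @ [] @ [])"
    by (rule hom_ctx[OF can w]) simp
  have "H2 u u w []"
  proof -
    have "H2 u u (Rd a @ (rw al2 (Rd a) @ w @ Rd a) @ rw al2 (Rd a)) w"
      using hom_trans[OF h2[simplified] h3[simplified]] by simp
    then have hw: "H2 u u w (Rd a @ (rw al2 (Rd a) @ w @ Rd a) @ rw al2 (Rd a))" using hom_sym by blast
    have h1': "H2 u u (Rd a @ (rw al2 (Rd a) @ w @ Rd a) @ rw al2 (Rd a)) (Rd a @ rw al2 (Rd a))"
      using h1 by simp
    show ?thesis using hom_trans[OF hom_trans[OF hw h1'] can] .
  qed
  then show "(w, []) \<in> (homot_rel DD al2 s2 u)\<^sup>*" unfolding hom_def homot_rel_eq .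
qed

lemma CONN2:
  assumes "connected_map D \<alpha> \<sigma>"
  shows "connected_map DD al2 s2"
  unfolding connected_map_def
proof (intro ballI)
  fix u v assume u: "u \<in> verts DD s2" and v: "v \<in> verts DD s2"
  obtain a where a: "a \<in> DD" "u = vorb s2 a" using u unfolding verts_def by blast
  obtain b where b: "b \<in> DD" "v = vorb s2 b" using v unfolding verts_def by blast
  have fa: "fst a \<in> D" "fst b \<in> D" using a b by (auto simp: D2_def)
  then obtain Q where Q: "W (vorb \<sigma> (fst a)) Q (vorb \<sigma> (fst b))"
    using assms unfolding connected_map_def verts_def by blast
  have "W2 (V0 (fst a)) (lam \<alpha> Q) (V0 (fst b))" using lam_walk'[OF fa Q] .
  then have "W2 u (Rd a @ lam \<alpha> Q @ rw al2 (Rd b)) v"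
    using Rd_walk[OF a(1)] rRd_walk[OF b(1)] a b walk_appendI by metis
  then show "\<exists>w. W2 u w v" by blast
qed

end

lemma arith1:
  fixes g F n :: real
  assumes "0 \<le> g" "g \<le> F * (n + 1)" "1 \<le> F" "0 \<le> n"
  shows "- 2 + g / max 2 F < n"
proof -
  have "g / max 2 F \<le> g / F"
    by (rule divide_left_mono) (use assms in auto)
  also have "g / F \<le> n + 1" using assms by (simp add: divide_le_eq mult.commute)
  finally show ?thesis by simp
qed

lemma gdist_le: "is_walk D \<alpha> \<sigma> u w v \<Longrightarrow> gdist D \<alpha> \<sigma> u v \<le> real (length w)"
proof -
  assume h: "is_walk D \<alpha> \<sigma> u w v"
  have "(LEAST n. \<exists>w. is_walk D \<alpha> \<sigma> u w v \<and> length w = n) \<le> length w"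
    by (rule Least_le) (use h in blast)
  then show ?thesis unfolding gdist_def by simp
qed

lemma gdist_attain: "is_walk D \<alpha> \<sigma> u w0 v \<Longrightarrow> \<exists>w. is_walk D \<alpha> \<sigma> u w v \<and> gdist D \<alpha> \<sigma> u v = real (length w)"
proof -
  assume "is_walk D \<alpha> \<sigma> u w0 v"
  then have ex: "\<exists>n. \<exists>w. is_walk D \<alpha> \<sigma> u w v \<and> length w = n" by blast
  show ?thesis using LeastI_ex[OF ex] unfolding gdist_def by metis
qed

context M begin

lemma QI2:
  assumes F: "\<forall>d\<in>D. fdeg \<alpha> \<sigma> d \<le> F" "1 \<le> F"
    and conn: "connected_map D \<alpha> \<sigma>"
  shows "quasi_isometric (verts D \<sigma>) (gdist D \<alpha> \<sigma>) (verts DD s2) (gdist DD al2 s2)"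
  unfolding quasi_isometric_def
proof (intro exI conjI)
  let ?L = "max 2 (real F)"
  show "lv ` verts D \<sigma> \<subseteq> verts DD s2"
    unfolding verts_def using lv_vorb inDD(1) by auto
  show "?L > 1" by simp
  show "(2::real) > 0" by simp
  have conn2: "connected_map DD al2 s2" using CONN2[OF conn] .
  show "\<forall>x\<in>verts D \<sigma>. \<forall>y\<in>verts D \<sigma>. - 2 + gdist D \<alpha> \<sigma> x y / ?L < gdist DD al2 s2 (lv x) (lv y) \<and>
      gdist DD al2 s2 (lv x) (lv y) < 2 + ?L * gdist D \<alpha> \<sigma> x y"
  proof (intro ballI conjI)
    fix x y assume x: "x \<in> verts D \<sigma>" and y: "y \<in> verts D \<sigma>"
    obtain d1 where d1: "d1 \<in> D" "x = vorb \<sigma> d1" using x unfolding verts_def by blast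
    obtain d2 where d2: "d2 \<in> D" "y = vorb \<sigma> d2" using y unfolding verts_def by blast
    obtain Q0 where Q0: "W x Q0 y" using conn x y unfolding connected_map_def by blast
    obtain Q where Q: "W x Q y" "gdist D \<alpha> \<sigma> x y = real (length Q)" using gdist_attain[OF Q0] by blast
    have "W2 (lv x) (lam \<alpha> Q) (lv y)" using lam_walk[OF Q(1)] .
    then have "gdist DD al2 s2 (lv x) (lv y) \<le> real (length (lam \<alpha> Q))"
      by (rule gdist_le)
    moreover have "real (length (lam \<alpha> Q)) = 2 * real (length Q)"
      unfolding length_lam[of \<alpha> Q] by simp
    ultimately have "gdist DD al2 s2 (lv x) (lv y) \<le> 2 * real (length Q)" by linarith
    moreover have "2 * real (length Q) \<le> ?L * real (length Q)" by (simp add: mult_right_mono)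
    ultimately show "gdist DD al2 s2 (lv x) (lv y) < 2 + ?L * gdist D \<alpha> \<sigma> x y" using Q(2) by simp
    have lx: "lv x = vorb s2 (d1, 0)" "lv y = vorb s2 (d2, 0)" using d1 d2 lv_vorb by auto
    have "lv x \<in> verts DD s2" "lv y \<in> verts DD s2" unfolding lx verts_def using d1 d2 by auto
    then obtain w0 where "W2 (lv x) w0 (lv y)" using conn2 unfolding connected_map_def by blast
    then obtain w where w: "W2 (lv x) w (lv y)" "gdist DD al2 s2 (lv x) (lv y) = real (length w)"
      using gdist_attain by blast
    obtain P where P: "W (vorb \<sigma> d1) P (vorb \<sigma> d2)" "length P \<le> F * (length w + 1)"
    proof -
      have "W2 (vorb s2 (d1, 0)) w (vorb s2 (d2, 0))" using w(1) unfolding lx .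
      from PR[OF F inDD(1)[OF d1(1)] inDD(1)[OF d2(1)] this] obtain P where
        P1: "W (vorb \<sigma> (fst (d1, 0::nat))) P (vorb \<sigma> (fst (d2, 0::nat)))" and
        P2: "length P \<le> F * (length w + 1)" by (elim exE conjE)
      show ?thesis using that[of P] P1 P2 by (simp only: fst_conv)
    qed
    have "gdist D \<alpha> \<sigma> x y \<le> real (length P)" using gdist_le[OF P(1)] d1(2) d2(2) by simp
    also have "\<dots> \<le> real (F * (length w + 1))" using P(2) by (simp only: of_nat_le_iff)
    also have "\<dots> = real F * (real (length w) + 1)" by (simp add: algebra_simps)
    finally have g: "gdist D \<alpha> \<sigma> x y \<le> real F * (real (length w) + 1)" .
    have gn: "gdist D \<alpha> \<sigma> x y \<ge> 0" using Q(2) by simp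
    have F1: "1 \<le> real F" using F by simp
    show "- 2 + gdist D \<alpha> \<sigma> x y / ?L < gdist DD al2 s2 (lv x) (lv y)"
      unfolding w(2) by (rule arith1[OF gn g F1]) simp
  qed
  show "\<forall>z\<in>verts DD s2. \<exists>x\<in>verts D \<sigma>. gdist DD al2 s2 z (lv x) \<le> 2"
  proof
    fix z assume "z \<in> verts DD s2"
    then obtain a where a: "a \<in> DD" "z = vorb s2 a" unfolding verts_def by blast
    have fa: "fst a \<in> D" using a by (auto simp: D2_def)
    have "W2 z (Rd a) (V0 (fst a))" unfolding a(2) by (rule Rd_walk[OF a(1)])
    then have "W2 z (Rd a) (lv (vorb \<sigma> (fst a)))" unfolding lv_vorb .
    then have g1: "gdist DD al2 s2 z (lv (vorb \<sigma> (fst a))) \<le> real (length (Rd a))" by (rule gdist_le)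
    have "length (Rd a) \<le> 2" by (simp add: Rd_def)
    then have "real (length (Rd a)) \<le> 2" by simp
    then have "gdist DD al2 s2 z (lv (vorb \<sigma> (fst a))) \<le> 2" using g1 by linarith
    moreover have "vorb \<sigma> (fst a) \<in> verts D \<sigma>" using fa unfolding verts_def by blast
    ultimately show "\<exists>x\<in>verts D \<sigma>. gdist DD al2 s2 z (lv x) \<le> 2" by blast
  qed
qed

lemma NF2:
  assumes "finite (nonflat_faces D \<alpha> \<sigma>)" "finite (nonflat_vertices D \<sigma>)"
  shows "finite (nonflat_vertices DD s2)"
proof -
  have "nonflat_vertices DD s2 \<subseteq> lv ` nonflat_vertices D \<sigma> \<union> (\<lambda>U. (\<lambda>x. (x, 3::nat)) ` U) ` nonflat_faces D \<alpha> \<sigma>"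
  proof
    fix U assume "U \<in> nonflat_vertices DD s2"
    then obtain x where x: "x \<in> DD" "U = vorb s2 x" "card (vorb s2 x) \<noteq> 4"
      unfolding nonflat_vertices_def vdeg_def by blast
    obtain d i where xd: "x = (d, i)" "d \<in> D" "i = 0 \<or> i = 1 \<or> i = 2 \<or> i = 3"
      using x(1) by (cases x) (auto simp: DD_iff)
    have injl: "inj_on (\<lambda>x. (x, n::nat)) A" for n A by (simp add: inj_on_def)
    consider "i = 0" | "i = 1 \<or> i = 2" | "i = 3" using xd by blast
    then show "U \<in> lv ` nonflat_vertices D \<sigma> \<union> (\<lambda>U. (\<lambda>x. (x, 3::nat)) ` U) ` nonflat_faces D \<alpha> \<sigma>"
    proof cases
      case 1
      then have "U = lv (vorb \<sigma> d)" "card (vorb \<sigma> d) \<noteq> 4"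
        using x xd vorb2_0 card_image[OF injl[of 0 "vorb \<sigma> d"]] by auto
      then show ?thesis using xd unfolding nonflat_vertices_def vdeg_def by blast
    next
      case 2
      have "card {(d, 1::nat), (d, 2), (\<alpha> d, 1), (\<alpha> d, 2)} = 4"
        using al(3)[OF xd(2)] by (simp add: card_insert_if)
      then have False using 2 x xd vorb2_1 vorb2_2 by auto
      then show ?thesis ..
    next
      case 3
      then have "U = (\<lambda>x. (x, 3::nat)) ` forb \<alpha> \<sigma> d" "card (forb \<alpha> \<sigma> d) \<noteq> 4"
        using x xd vorb2_3 card_image[OF injl[of 3 "forb \<alpha> \<sigma> d"]] by auto
      then show ?thesis using xd unfolding nonflat_faces_def fdeg_def by blast
    qed
  qed
  then show ?thesis using assms finite_subset by blast
qed

end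

lemma F_bound:
  assumes "finite (nonflat_faces D \<alpha> \<sigma>)" "\<forall>d\<in>D. finite (forb \<alpha> \<sigma> d)"
  shows "\<exists>F. (\<forall>d\<in>D. fdeg \<alpha> \<sigma> d \<le> F) \<and> 1 \<le> F"
proof -
  let ?F = "max 4 (Max (insert 0 (card ` nonflat_faces D \<alpha> \<sigma>)))"
  have "\<forall>d\<in>D. fdeg \<alpha> \<sigma> d \<le> ?F"
  proof
    fix d assume d: "d \<in> D"
    show "fdeg \<alpha> \<sigma> d \<le> ?F"
    proof (cases "fdeg \<alpha> \<sigma> d = 4")
      case True then show ?thesis by simp
    next
      case False
      then have "forb \<alpha> \<sigma> d \<in> nonflat_faces D \<alpha> \<sigma>" using d unfolding nonflat_faces_def by blast
      then have "card (forb \<alpha> \<sigma> d) \<le> Max (insert 0 (card ` nonflat_faces D \<alpha> \<sigma>))"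
        using assms(1) by (intro Max_ge) auto
      then show ?thesis unfolding fdeg_def by simp
    qed
  qed
  then show ?thesis by (intro exI[of _ ?F]) simp
qed

definition iso :: "'a set \<Rightarrow> ('a \<Rightarrow> 'a) \<Rightarrow> ('a \<Rightarrow> 'a) \<Rightarrow> 'b set \<Rightarrow> ('b \<Rightarrow> 'b) \<Rightarrow> ('b \<Rightarrow> 'b) \<Rightarrow> ('a \<Rightarrow> 'b) \<Rightarrow> bool" where
  "iso X1 a1 s1 X2 a2 s2 h \<longleftrightarrow> bij_betw h X1 X2 \<and> (\<forall>x\<in>X1. h (a1 x) = a2 (h x) \<and> h (s1 x) = s2 (h x))
     \<and> a1 ` X1 \<subseteq> X1 \<and> s1 ` X1 \<subseteq> X1"

lemma iso_inv:
  assumes "iso X1 a1 s1 X2 a2 s2 h"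
  shows "iso X2 a2 s2 X1 a1 s1 (inv_into X1 h)"
proof -
  have b: "bij_betw h X1 X2" using assms unfolding iso_def by (elim conjE)
  have c: "\<forall>x\<in>X1. h (a1 x) = a2 (h x) \<and> h (s1 x) = s2 (h x)" using assms unfolding iso_def by (elim conjE)
  have i1: "a1 ` X1 \<subseteq> X1" using assms unfolding iso_def by (elim conjE)
  have i2: "s1 ` X1 \<subseteq> X1" using assms unfolding iso_def by (elim conjE)
  have bi: "bij_betw (inv_into X1 h) X2 X1" using bij_betw_inv_into[OF b] .
  have hD: "h ` X1 = X2" using b by (simp add: bij_betw_def)
  have inj: "inj_on h X1" using b by (simp add: bij_betw_def)
  have key: "inv_into X1 h (a2 y) = a1 (inv_into X1 h y) \<and> inv_into X1 h (s2 y) = s1 (inv_into X1 h y)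
     \<and> a2 y \<in> X2 \<and> s2 y \<in> X2" if y: "y \<in> X2" for y
  proof -
    obtain x where x: "x \<in> X1" "y = h x" using hD y by blast
    have ax: "a1 x \<in> X1" "s1 x \<in> X1" using i1 i2 x(1) by blast+
    have e: "a2 y = h (a1 x)" "s2 y = h (s1 x)" using c x by simp_all
    have ix: "inv_into X1 h y = x" using inv_into_f_f[OF inj x(1)] x(2) by simp
    have "inv_into X1 h (a2 y) = a1 x" using inv_into_f_f[OF inj ax(1)] e(1) by simp
    moreover have "inv_into X1 h (s2 y) = s1 x" using inv_into_f_f[OF inj ax(2)] e(2) by simp
    moreover have "a2 y \<in> X2" "s2 y \<in> X2" using e ax hD by blast+
    ultimately show ?thesis using ix by simp
  qed
  have "\<forall>y\<in>X2. inv_into X1 h (a2 y) = a1 (inv_into X1 h y) \<and> inv_into X1 h (s2 y) = s1 (inv_into X1 h y)"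
    using key by blast
  moreover have "a2 ` X2 \<subseteq> X2" "s2 ` X2 \<subseteq> X2" using key by blast+
  ultimately show ?thesis using bi unfolding iso_def by blast
qed

context
  fixes X1 a1 s1 X2 a2 s2 h
  assumes iso: "iso X1 a1 s1 X2 a2 s2 h"
begin

lemma iso_b: "bij_betw h X1 X2" using iso unfolding iso_def by (elim conjE)
lemma iso_inj: "inj_on h X1" using iso_b by (simp add: bij_betw_def)
lemma iso_img: "h ` X1 = X2" using iso_b by (simp add: bij_betw_def)
lemma iso_c: "x \<in> X1 \<Longrightarrow> h (a1 x) = a2 (h x)" "x \<in> X1 \<Longrightarrow> h (s1 x) = s2 (h x)"
  using iso unfolding iso_def by blast+
lemma iso_cl: "x \<in> X1 \<Longrightarrow> a1 x \<in> X1" "x \<in> X1 \<Longrightarrow> s1 x \<in> X1"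
  using iso unfolding iso_def by blast+

lemma iso_vorb_sub: "x \<in> X1 \<Longrightarrow> vorb s1 x \<subseteq> X1"
  unfolding vorb_def using funpow_in[of s1 X1] iso_cl by blast

lemma iso_vorb: "x \<in> X1 \<Longrightarrow> vorb s2 (h x) = h ` vorb s1 x"
proof -
  assume x: "x \<in> X1"
  have "(s2 ^^ n) (h x) = h ((s1 ^^ n) x)" for n
  proof (induct n)
    case (Suc n)
    have "(s1 ^^ n) x \<in> X1" using funpow_in[of s1 X1] iso_cl x by blast
    then show ?case using Suc iso_c by simp
  qed simp
  then show ?thesis unfolding vorb_def by auto
qed

lemma iso_phi: "x \<in> X1 \<Longrightarrow> fphi a2 s2 (h x) = h (fphi a1 s1 x)"
  by (simp add: fphi_def iso_c iso_cl)

lemma iso_phi_cl: "x \<in> X1 \<Longrightarrow> fphi a1 s1 x \<in> X1"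
  by (simp add: fphi_def iso_cl)

lemma iso_phin: "x \<in> X1 \<Longrightarrow> (fphi a2 s2 ^^ n) (h x) = h ((fphi a1 s1 ^^ n) x)"
proof (induct n)
  case (Suc n)
  have "(fphi a1 s1 ^^ n) x \<in> X1" using funpow_in[of "fphi a1 s1" X1] iso_phi_cl Suc by blast
  then show ?case using Suc iso_phi by simp
qed simp

lemma iso_forb: "x \<in> X1 \<Longrightarrow> forb a2 s2 (h x) = h ` forb a1 s1 x"
  unfolding forb_def using iso_phin by auto

lemma iso_forb_sub: "x \<in> X1 \<Longrightarrow> forb a1 s1 x \<subseteq> X1"
  unfolding forb_def using funpow_in[of "fphi a1 s1" X1] iso_phi_cl by blast

lemma iso_vdeg: "x \<in> X1 \<Longrightarrow> vdeg s2 (h x) = vdeg s1 x"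
  unfolding vdeg_def using iso_vorb iso_vorb_sub iso_inj by (metis card_image inj_on_subset)

lemma iso_fdeg: "x \<in> X1 \<Longrightarrow> fdeg a2 s2 (h x) = fdeg a1 s1 x"
  unfolding fdeg_def using iso_forb iso_forb_sub iso_inj by (metis card_image inj_on_subset)

lemma iso_facewalk: "x \<in> X1 \<Longrightarrow> facewalk a2 s2 (h x) = map h (facewalk a1 s1 x)"
  unfolding facewalk_def using iso_fdeg iso_phin by simp

lemma iso_walk: "is_walk X1 a1 s1 u w v \<Longrightarrow> is_walk X2 a2 s2 (h ` u) (map h w) (h ` v)"
proof (induct w arbitrary: u)
  case Nil then show ?case by simp
next
  case (Cons d w)
  then have d: "d \<in> X1" "vorb s1 d = u" "is_walk X1 a1 s1 (vorb s1 (a1 d)) w v" by auto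
  have "is_walk X2 a2 s2 (h ` vorb s1 (a1 d)) (map h w) (h ` v)" using Cons d by blast
  moreover have "vorb s2 (a2 (h d)) = h ` vorb s1 (a1 d)"
    using iso_c(1)[OF d(1)] iso_vorb[OF iso_cl(1)[OF d(1)]] by simp
  moreover have "vorb s2 (h d) = h ` u" using iso_vorb d by simp
  moreover have "h d \<in> X2" using iso_img d by blast
  ultimately show ?case by simp
qed

lemma iso_hstep: "hstep X1 a1 s1 x y \<Longrightarrow> hstep X2 a2 s2 (map h x) (map h y)"
proof -
  assume "hstep X1 a1 s1 x y"
  then obtain xs ys d where d: "d \<in> X1" "x = xs @ ys"
    "y = xs @ [d, a1 d] @ ys \<or> y = xs @ facewalk a1 s1 d @ ys" unfolding hstep_def by blast
  have "h d \<in> X2" using d iso_img by blast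
  moreover have "map h y = map h xs @ [h d, a2 (h d)] @ map h ys \<or>
      map h y = map h xs @ facewalk a2 s2 (h d) @ map h ys"
    using d iso_c iso_facewalk by auto
  ultimately show ?thesis unfolding hstep_def using d by auto
qed

lemma iso_hom: "hom X1 a1 s1 u v x y \<Longrightarrow> hom X2 a2 s2 (h ` u) (h ` v) (map h x) (map h y)"
  unfolding hom_def
proof (induct rule: rtrancl_induct)
  case base then show ?case by simp
next
  case (step y z)
  have "(map h y, map h z) \<in> hrel X2 a2 s2 (h ` u) (h ` v)"
    using step(2) iso_walk iso_hstep unfolding hrel_def by blast
  then show ?case using step(3) by simp
qed

end

lemma iso_back:
  assumes iso: "iso X1 a1 s1 X2 a2 s2 h" and "U \<subseteq> X1"
  shows "inv_into X1 h ` h ` U = U"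
  using assms iso_inj[OF iso] by (simp add: inv_into_image_cancel)

lemma iso_fwd:
  assumes iso: "iso X1 a1 s1 X2 a2 s2 h" and "U \<subseteq> X2"
  shows "h ` inv_into X1 h ` U = U"
  using assms iso_img[OF iso] by (simp add: image_inv_into_cancel)

lemma iso_mapfwd:
  assumes iso: "iso X1 a1 s1 X2 a2 s2 h" and "set w \<subseteq> X2"
  shows "map h (map (inv_into X1 h) w) = w"
  using assms iso_img[OF iso] by (induct w) (auto simp: f_inv_into_f)

lemma iso_verts:
  assumes iso: "iso X1 a1 s1 X2 a2 s2 h"
  shows "verts X2 s2 = (\<lambda>U. h ` U) ` verts X1 s1"
  unfolding verts_def using iso_vorb[OF iso] iso_img[OF iso] by auto

lemma iso_walk_back:
  assumes iso: "iso X1 a1 s1 X2 a2 s2 h" and U: "U \<subseteq> X1" and V: "V \<subseteq> X1"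
    and w: "is_walk X2 a2 s2 (h ` U) w (h ` V)"
  shows "is_walk X1 a1 s1 U (map (inv_into X1 h) w) V \<and> map h (map (inv_into X1 h) w) = w"
proof -
  have "is_walk X1 a1 s1 (inv_into X1 h ` h ` U) (map (inv_into X1 h) w) (inv_into X1 h ` h ` V)"
    using iso_walk[OF iso_inv[OF iso] w] .
  then show ?thesis using iso_back[OF iso U] iso_back[OF iso V] iso_mapfwd[OF iso walk_set[OF w]] by simp
qed

lemma iso_gdist:
  assumes iso: "iso X1 a1 s1 X2 a2 s2 h" and U: "U \<subseteq> X1" and V: "V \<subseteq> X1"
  shows "gdist X2 a2 s2 (h ` U) (h ` V) = gdist X1 a1 s1 U V"
proof -
  have "(\<exists>w. is_walk X2 a2 s2 (h ` U) w (h ` V) \<and> length w = n) \<longleftrightarrow>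
        (\<exists>w. is_walk X1 a1 s1 U w V \<and> length w = n)" for n
  proof
    assume "\<exists>w. is_walk X2 a2 s2 (h ` U) w (h ` V) \<and> length w = n"
    then obtain w where "is_walk X2 a2 s2 (h ` U) w (h ` V)" "length w = n" by blast
    then show "\<exists>w. is_walk X1 a1 s1 U w V \<and> length w = n"
      using iso_walk_back[OF iso U V] by (metis length_map)
  next
    assume "\<exists>w. is_walk X1 a1 s1 U w V \<and> length w = n"
    then show "\<exists>w. is_walk X2 a2 s2 (h ` U) w (h ` V) \<and> length w = n"
      using iso_walk[OF iso] by (metis length_map)
  qed
  then show ?thesis unfolding gdist_def by simp
qed

lemma iso_verts_sub:
  assumes iso: "iso X1 a1 s1 X2 a2 s2 h" and "U \<in> verts X1 s1"
  shows "U \<subseteq> X1"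
  using assms iso_vorb_sub[OF iso] unfolding verts_def by blast

lemma iso_proper:
  assumes iso: "iso X1 a1 s1 X2 a2 s2 h" and P: "proper_map X1 a1 s1"
  shows "proper_map X2 a2 s2"
proof -
  have cm: "is_cmap X1 a1 s1" and inf: "infinite X1" and fin: "\<forall>d\<in>X1. finite (vorb s1 d) \<and> finite (forb a1 s1 d)"
    and con: "connected_map X1 a1 s1" and sc: "simply_connected_map X1 a1 s1"
    using P unfolding proper_map_def by auto
  have inj: "inj_on h X1" and img: "h ` X1 = X2" using iso_inj[OF iso] iso_img[OF iso] by auto
  have cm2: "is_cmap X2 a2 s2"
    unfolding is_cmap_def
  proof (intro conjI ballI)
    fix y assume "y \<in> X2"
    then obtain x where x: "x \<in> X1" "y = h x" using img by blast
    have ax: "a1 x \<in> X1" "a1 (a1 x) = x" "a1 x \<noteq> x" using cm x unfolding is_cmap_def by auto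
    show "a2 y \<in> X2" using x ax iso_c[OF iso] img by (metis imageI)
    show "a2 (a2 y) = y" using x ax iso_c[OF iso] by metis
    show "a2 y \<noteq> y" using x ax iso_c[OF iso] inj by (metis inj_onD)
  next
    have sb: "bij_betw s1 X1 X1" using cm unfolding is_cmap_def by auto
    have "s2 ` X2 = X2"
    proof -
      have "s2 ` X2 = h ` s1 ` X1" using img iso_c[OF iso] by (auto simp: image_iff)
      then show ?thesis using bij_betw_imp_surj_on[OF sb] img by simp
    qed
    moreover have "inj_on s2 X2"
    proof (rule inj_onI)
      fix y1 y2 assume y: "y1 \<in> X2" "y2 \<in> X2" "s2 y1 = s2 y2"
      then obtain x1 x2 where x: "x1 \<in> X1" "x2 \<in> X1" "y1 = h x1" "y2 = h x2" using img by blast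
      then have "h (s1 x1) = h (s1 x2)" using y iso_c[OF iso] by metis
      then have "s1 x1 = s1 x2" using inj iso_cl[OF iso] x by (meson inj_onD)
      then have "x1 = x2" using bij_betw_imp_inj_on[OF sb] x by (meson inj_onD)
      then show "y1 = y2" using x by simp
    qed
    ultimately show "bij_betw s2 X2 X2" unfolding bij_betw_def by blast
  qed
  have inf2: "infinite X2" using inf img inj by (metis finite_imageD)
  have fin2: "\<forall>d\<in>X2. finite (vorb s2 d) \<and> finite (forb a2 s2 d)"
    using fin img iso_vorb[OF iso] iso_forb[OF iso] by auto
  have con2: "connected_map X2 a2 s2"
    unfolding connected_map_def
  proof (intro ballI)
    fix U V assume "U \<in> verts X2 s2" "V \<in> verts X2 s2"
    then obtain U1 V1 where "U1 \<in> verts X1 s1" "V1 \<in> verts X1 s1" "U = h ` U1" "V = h ` V1"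
      using iso_verts[OF iso] by auto
    then show "\<exists>w. is_walk X2 a2 s2 U w V" using con iso_walk[OF iso] unfolding connected_map_def by metis
  qed
  have sc2: "simply_connected_map X2 a2 s2"
    unfolding simply_connected_map_def
  proof (intro ballI allI impI)
    fix U w assume U: "U \<in> verts X2 s2" and w: "is_walk X2 a2 s2 U w U"
    then obtain U1 where U1: "U1 \<in> verts X1 s1" "U = h ` U1" using iso_verts[OF iso] by auto
    have sub: "U1 \<subseteq> X1" using iso_verts_sub[OF iso U1(1)] .
    have wb: "is_walk X1 a1 s1 U1 (map (inv_into X1 h) w) U1" "map h (map (inv_into X1 h) w) = w"
      using iso_walk_back[OF iso sub sub] w U1 by auto
    have "hom X1 a1 s1 U1 U1 (map (inv_into X1 h) w) []"
      using sc U1(1) wb(1) unfolding simply_connected_map_def hom_def homot_rel_eq by blast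
    from iso_hom[OF iso this] have "hom X2 a2 s2 U U w []" using wb(2) U1(2) by simp
    then show "(w, []) \<in> (homot_rel X2 a2 s2 U)\<^sup>*" unfolding hom_def homot_rel_eq .
  qed
  show ?thesis unfolding proper_map_def using cm2 inf2 fin2 con2 sc2 by blast
qed

lemma iso_QI:
  assumes iso: "iso X1 a1 s1 X2 a2 s2 h"
    and Q: "quasi_isometric X dX (verts X1 s1) (gdist X1 a1 s1)"
  shows "quasi_isometric X dX (verts X2 s2) (gdist X2 a2 s2)"
proof -
  obtain \<phi> L K C where q: "\<phi> ` X \<subseteq> verts X1 s1" "L > 1" "K > 0"
    "\<forall>x\<in>X. \<forall>y\<in>X. - K + dX x y / L < gdist X1 a1 s1 (\<phi> x) (\<phi> y) \<and> gdist X1 a1 s1 (\<phi> x) (\<phi> y) < K + L * dX x y"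
    "\<forall>z\<in>verts X1 s1. \<exists>x\<in>X. gdist X1 a1 s1 z (\<phi> x) \<le> C"
    using Q unfolding quasi_isometric_def by (elim exE conjE) (rule that, assumption+)
  have sub: "x \<in> X \<Longrightarrow> \<phi> x \<subseteq> X1" for x using q(1) iso_verts_sub[OF iso] by blast
  have gd: "x \<in> X \<Longrightarrow> y \<in> X \<Longrightarrow> gdist X2 a2 s2 (h ` \<phi> x) (h ` \<phi> y) = gdist X1 a1 s1 (\<phi> x) (\<phi> y)" for x y
    using iso_gdist[OF iso sub sub] by blast
  show ?thesis unfolding quasi_isometric_def
  proof (intro exI conjI)
    show "(\<lambda>x. h ` \<phi> x) ` X \<subseteq> verts X2 s2" using q(1) iso_verts[OF iso] by auto
    show "L > 1" "K > 0" using q by auto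
    show "\<forall>x\<in>X. \<forall>y\<in>X. - K + dX x y / L < gdist X2 a2 s2 (h ` \<phi> x) (h ` \<phi> y) \<and>
        gdist X2 a2 s2 (h ` \<phi> x) (h ` \<phi> y) < K + L * dX x y" using q(4) gd by simp
    show "\<forall>z\<in>verts X2 s2. \<exists>x\<in>X. gdist X2 a2 s2 z (h ` \<phi> x) \<le> C"
    proof
      fix z assume "z \<in> verts X2 s2"
      then obtain z1 where z1: "z1 \<in> verts X1 s1" "z = h ` z1" using iso_verts[OF iso] by auto
      then obtain x where x: "x \<in> X" "gdist X1 a1 s1 z1 (\<phi> x) \<le> C" using q(5) by blast
      have "gdist X2 a2 s2 z (h ` \<phi> x) = gdist X1 a1 s1 z1 (\<phi> x)"
        using iso_gdist[OF iso iso_verts_sub[OF iso z1(1)] sub[OF x(1)]] z1 by simp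
      then have "gdist X2 a2 s2 z (h ` \<phi> x) \<le> C" using x(2) by simp
      then show "\<exists>x\<in>X. gdist X2 a2 s2 z (h ` \<phi> x) \<le> C" using x(1) by blast
    qed
  qed
qed

lemma iso_nonflat:
  assumes iso: "iso X1 a1 s1 X2 a2 s2 h" and "finite (nonflat_vertices X1 s1)"
  shows "finite (nonflat_vertices X2 s2)"
proof -
  have "nonflat_vertices X2 s2 \<subseteq> (\<lambda>U. h ` U) ` nonflat_vertices X1 s1"
  proof
    fix U assume "U \<in> nonflat_vertices X2 s2"
    then obtain y where y: "y \<in> X2" "U = vorb s2 y" "vdeg s2 y \<noteq> 4" unfolding nonflat_vertices_def by blast
    then obtain x where x: "x \<in> X1" "y = h x" using iso_img[OF iso] by blast
    then show "U \<in> (\<lambda>U. h ` U) ` nonflat_vertices X1 s1"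
      using y iso_vorb[OF iso] iso_vdeg[OF iso] unfolding nonflat_vertices_def by auto
  qed
  then show ?thesis using assms finite_subset by blast
qed

lemma iso_fdeg4:
  assumes iso: "iso X1 a1 s1 X2 a2 s2 h" and "\<forall>x\<in>X1. fdeg a1 s1 x = 4"
  shows "\<forall>y\<in>X2. fdeg a2 s2 y = 4"
  using assms iso_img[OF iso] iso_fdeg[OF iso] by auto

primrec Gw :: "('d \<Rightarrow> 'd) \<Rightarrow> ('d \<Rightarrow> 'd) \<Rightarrow> 'd \<Rightarrow> bool list \<Rightarrow> 'd" where
  "Gw a s d0 [] = d0"
| "Gw a s d0 (b # bs) = (if b then s (Gw a s d0 bs) else a (Gw a s d0 bs))"

context M begin

lemma Gw_pow: "(\<sigma> ^^ n) (Gw \<alpha> \<sigma> d0 bs) = Gw \<alpha> \<sigma> d0 (replicate n True @ bs)"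
  by (induct n) auto

lemma Gw_vorb: "vorb \<sigma> (Gw \<alpha> \<sigma> d0 bs) \<subseteq> range (Gw \<alpha> \<sigma> d0)"
  unfolding vorb_def using Gw_pow by auto

lemma Gw_walk: "W u w v \<Longrightarrow> u = vorb \<sigma> (Gw \<alpha> \<sigma> d0 bs) \<Longrightarrow> \<exists>bs'. v = vorb \<sigma> (Gw \<alpha> \<sigma> d0 bs')"
proof (induct w arbitrary: u bs)
  case Nil then show ?case by auto
next
  case (Cons e w)
  have e: "vorb \<sigma> e = u" "W (vorb \<sigma> (\<alpha> e)) w v" using Cons.prems by auto
  have "e \<in> vorb \<sigma> (Gw \<alpha> \<sigma> d0 bs)" using vorb_self[of e] e(1) Cons.prems(2) by simp
  then obtain cs where cs: "e = Gw \<alpha> \<sigma> d0 cs" using Gw_vorb by blast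
  have "vorb \<sigma> (\<alpha> e) = vorb \<sigma> (Gw \<alpha> \<sigma> d0 (False # cs))" using cs by simp
  then show ?case using Cons.hyps[OF e(2)] by blast
qed

lemma countable_D:
  assumes conn: "connected_map D \<alpha> \<sigma>" and d0: "d0 \<in> D"
  shows "countable D"
proof -
  have "D \<subseteq> range (Gw \<alpha> \<sigma> d0)"
  proof
    fix d assume d: "d \<in> D"
    have "vorb \<sigma> d0 \<in> verts D \<sigma>" "vorb \<sigma> d \<in> verts D \<sigma>" using d d0 unfolding verts_def by auto
    then obtain w where w: "W (vorb \<sigma> d0) w (vorb \<sigma> d)" using conn unfolding connected_map_def by blast
    have "vorb \<sigma> d0 = vorb \<sigma> (Gw \<alpha> \<sigma> d0 [])" by simp
    then obtain bs where "vorb \<sigma> d = vorb \<sigma> (Gw \<alpha> \<sigma> d0 bs)" using Gw_walk[OF w] by blast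
    then show "d \<in> range (Gw \<alpha> \<sigma> d0)" using vorb_self[of d] Gw_vorb by blast
  qed
  moreover have "countable (range (Gw \<alpha> \<sigma> d0))" by (rule countable_image) simp
  ultimately show ?thesis by (rule countable_subset)
qed

lemma final_M:
  assumes P: "proper_map D \<alpha> \<sigma>"
    and nf: "finite (nonflat_faces D \<alpha> \<sigma>)" and nv: "finite (nonflat_vertices D \<sigma>)"
  shows "\<exists>(D' :: nat set) \<alpha>' \<sigma>'. proper_map D' \<alpha>' \<sigma>' \<and>
           (\<forall>d\<in>D'. fdeg \<alpha>' \<sigma>' d = 4) \<and>
           finite (nonflat_vertices D' \<sigma>') \<and>
           quasi_isometric (verts D \<sigma>) (gdist D \<alpha> \<sigma>) (verts D' \<sigma>') (gdist D' \<alpha>' \<sigma>')"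
proof -
  have inf: "infinite D" and conn: "connected_map D \<alpha> \<sigma>" and sc: "simply_connected_map D \<alpha> \<sigma>"
    using P unfolding proper_map_def by auto
  obtain F where F: "\<forall>d\<in>D. fdeg \<alpha> \<sigma> d \<le> F" "1 \<le> F" using F_bound[OF nf] fin by blast
  have P2: "proper_map DD al2 s2"
    unfolding proper_map_def using cm2 infinite2[OF inf] vorb2_fin forb2_fin CONN2[OF conn] SC2[OF F sc] by blast
  have f4: "\<forall>x\<in>DD. fdeg al2 s2 x = 4" using fdeg2 by blast
  have nv2: "finite (nonflat_vertices DD s2)" using NF2[OF nf nv] .
  have qi: "quasi_isometric (verts D \<sigma>) (gdist D \<alpha> \<sigma>) (verts DD s2) (gdist DD al2 s2)" using QI2[OF F conn] .
  obtain d0 where d0: "d0 \<in> D" using inf by (metis finite.emptyI ex_in_conv)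
  have cD: "countable D" using countable_D[OF conn d0] .
  have cDD: "countable DD" unfolding D2_def using cD by simp
  define h where "h = to_nat_on DD"
  have inj: "inj_on h DD" unfolding h_def using cDD by (rule inj_on_to_nat_on)
  define a' where "a' = (\<lambda>n. h (al2 (inv_into DD h n)))"
  define s' where "s' = (\<lambda>n. h (s2 (inv_into DD h n)))"
  have cl: "al2 ` DD \<subseteq> DD" "s2 ` DD \<subseteq> DD" using cm2 unfolding is_cmap_def bij_betw_def by auto
  have iso: "iso DD al2 s2 (h ` DD) a' s' h"
    unfolding iso_def
  proof (intro conjI ballI)
    show "bij_betw h DD (h ` DD)" using inj by (simp add: inj_on_imp_bij_betw)
    fix x assume x: "x \<in> DD"
    show "h (al2 x) = a' (h x)" unfolding a'_def using inv_into_f_f[OF inj x] by simp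
    show "h (s2 x) = s' (h x)" unfolding s'_def using inv_into_f_f[OF inj x] by simp
  qed (use cl in auto)
  have r1: "proper_map (h ` DD) a' s'" using iso_proper[OF iso P2] .
  have r2: "\<forall>d\<in>h ` DD. fdeg a' s' d = 4" using iso_fdeg4[OF iso f4] .
  have r3: "finite (nonflat_vertices (h ` DD) s')" using iso_nonflat[OF iso nv2] .
  have r4: "quasi_isometric (verts D \<sigma>) (gdist D \<alpha> \<sigma>) (verts (h ` DD) s') (gdist (h ` DD) a' s')"
    using iso_QI[OF iso qi] .
  show ?thesis
    by (rule exI[of _ "h ` DD"], rule exI[of _ a'], rule exI[of _ s']) (intro conjI r1 r2 r3 r4)
qed

end

theorem lemma3p3:
  fixes D :: "'d set" and \<alpha> \<sigma> :: "'d \<Rightarrow> 'd"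
  assumes "proper_map D \<alpha> \<sigma>"
    and "four_four_map D \<alpha> \<sigma>"
    and "finite (nonflat_faces D \<alpha> \<sigma>)"
    and "finite (nonflat_vertices D \<sigma>)"
  shows "\<exists>(D' :: nat set) \<alpha>' \<sigma>'. proper_map D' \<alpha>' \<sigma>' \<and>
           (\<forall>d\<in>D'. fdeg \<alpha>' \<sigma>' d = 4) \<and>
           finite (nonflat_vertices D' \<sigma>') \<and>
           quasi_isometric (verts D \<sigma>) (gdist D \<alpha> \<sigma>) (verts D' \<sigma>') (gdist D' \<alpha>' \<sigma>')"
proof -
  have "M D \<alpha> \<sigma>" using assms(1) unfolding proper_map_def M_def by blast
  from M.final_M[OF this assms(1,3,4)] show ?thesis .
qed

end
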